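(* Suppose Assumptions 1 and 2 hold. Then with high probability, $$\big\|(\mathbf R-\mathbf R^\star)\mathbf U^\star(\boldsymbol\Lambda^\star)^{-1/2}\big\|_{2,\infty}\le C\sqrt{\frac{d\log T}{\gamma\lambda^\star_d}}\left[1+\left(\sqrt{\frac{\log n}{\gamma}}+\sqrt{\frac1T}\right)\|\mathbf R^\star\|_{2,\infty}\right].$$
   Context: Setup. Let $n,T$ be positive integers and $\mathbf Z^\star\in\mathbb R^{n\times T}$ a deterministic real matrix whose $i$-th row $\mathbf Z^\star_i\in\mathbb R^T$ is the $i$-th (true) time series. The observed data are $\mathbf Z=\mathbf Z^\star+\mathbf N$, where $\mathbf N\in\mathbb R^{n\times T}$ is random noise with rows $\mathbf N_1,\dots,\mathbf N_n$. Let $\mathbf M=\mathbf I-\frac1T\mathbf J\in\mathbb R^{T\times T}$ be the centering projection ($\mathbf J$ the all-ones matrix). Define the signal powers $\sigma^{\star2}_i=\frac1T\|\mathbf M\mathbf Z^\star_i\|^2$, assumed positive for all $i$, and their noisy versions $\hat\sigma_i^2=\frac1T\|\mathbf M\mathbf Z_i\|^2$. Let $\boldsymbol\Sigma^\star=\operatorname{diag}(\sigma^{\star2}_1,\dots,\sigma^{\star2}_n)$ and $\hat{\boldsymbol\Sigma}=\operatorname{diag}(\hat\sigma^2_1,\dots,\hat\sigma^2_n)$. The true and observed correlation matrices are $\mathbf R^\star=\frac1T(\boldsymbol\Sigma^\star)^{-1/2}\mathbf Z^\star\mathbf M\mathbf Z^{\star\top}(\boldsymbol\Sigma^\star)^{-1/2}$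 and $\mathbf R=\frac1T\hat{\boldsymbol\Sigma}^{-1/2}\mathbf Z\mathbf M\mathbf Z^{\top}\hat{\boldsymbol\Sigma}^{-1/2}$. $\mathbf R^\star$ is positive semidefinite; let $d=\operatorname{rank}\mathbf R^\star$, with nonzero eigenvalues $\lambda^\star_1\ge\dots\ge\lambda^\star_d>0$, $\boldsymbol\Lambda^\star=\operatorname{diag}(\lambda^\star_1,\dots,\lambda^\star_d)$, and $\mathbf U^\star\in\mathbb R^{n\times d}$ with orthonormal columns such that $\mathbf R^\star=\mathbf U^\star\boldsymbol\Lambda^\star\mathbf U^{\star\top}$; $\kappa=\lambda^\star_1/\lambda^\star_d$. Assumption 1: the rows $\mathbf N_1,\dots,\mathbf N_n$ are mean zero and independent, $n=O(T)$, and each $\mathbf N_i$ is a $\nu_i$-subgaussian random vector (for every fixed unit vector $\mathbf u\in\mathbb R^T$, $\mathbf u^\top\mathbf N_i$ is $\nu_i$-subgaussian). Define $\gamma=\min_{i\in[n]}\sigma^{\star2}_i/\nu_i$. Assumption 2: $\lambda^\star_d$ is bounded away from zero, $\kappa=o(T)$, and $\kappa\log T/\gamma=o(1)$. Conventions: asymptotics are as $n,T\to\infty$; $C$ denotes a positive constant not depending on $n,T$; "with high probability" means with probability tending to one; $\|\mathbf B\|_{2,\infty}$ is the maximum Euclidean norm of the rows of $\mathbf B$. *)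

theory Defs
  imports "HOL-Probability.Probability" "HOL-Library.Landau_Symbols"
begin

text \<open>Matrices of varying size are represented as functions nat => nat => real,
  with dimensions passed explicitly; only entries inside the bounds matter.\<close>

definition mat_mul :: "nat \<Rightarrow> (nat \<Rightarrow> nat \<Rightarrow> real) \<Rightarrow> (nat \<Rightarrow> nat \<Rightarrow> real) \<Rightarrow> nat \<Rightarrow> nat \<Rightarrow> real" where
  "mat_mul m A B = (\<lambda>i j. \<Sum>l<m. A i l * B l j)"

definition centering :: "nat \<Rightarrow> nat \<Rightarrow> nat \<Rightarrow> real" where
  "centering T = (\<lambda>s t. (if s = t then 1 else 0) - 1 / real T)"

definition sig2 :: "nat \<Rightarrow> (nat \<Rightarrow> nat \<Rightarrow> real) \<Rightarrow> nat \<Rightarrow> real" where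
  "sig2 T Z i = (1 / real T) * (\<Sum>s<T. (\<Sum>t<T. centering T s t * Z i t)\<^sup>2)"

text \<open>Correlation matrix (1/T) Sigma^(-1/2) Z M Z^T Sigma^(-1/2), entrywise.\<close>
definition corr :: "nat \<Rightarrow> (nat \<Rightarrow> nat \<Rightarrow> real) \<Rightarrow> nat \<Rightarrow> nat \<Rightarrow> real" where
  "corr T Z = (\<lambda>i j. (1 / real T) * (\<Sum>s<T. \<Sum>t<T. Z i s * centering T s t * Z j t)
                       / (sqrt (sig2 T Z i) * sqrt (sig2 T Z j)))"

definition norm_2inf :: "nat \<Rightarrow> nat \<Rightarrow> (nat \<Rightarrow> nat \<Rightarrow> real) \<Rightarrow> real" where
  "norm_2inf n m B = Max (insert 0 ((\<lambda>i. sqrt (\<Sum>j<m. (B i j)\<^sup>2)) ` {..<n}))"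

definition subgaussian :: "'a measure \<Rightarrow> ('a \<Rightarrow> real) \<Rightarrow> real \<Rightarrow> bool" where
  "subgaussian M X \<nu> \<longleftrightarrow> X \<in> borel_measurable M \<and>
     (\<forall>s::real. integrable M (\<lambda>\<omega>. exp (s * X \<omega>)) \<and>
        (\<integral>\<omega>. exp (s * X \<omega>) \<partial>M) \<le> exp (\<nu> * s\<^sup>2 / 2))"

definition subgaussian_row :: "'a measure \<Rightarrow> nat \<Rightarrow> ('a \<Rightarrow> nat \<Rightarrow> real) \<Rightarrow> real \<Rightarrow> bool" where
  "subgaussian_row M T X \<nu> \<longleftrightarrow>
     (\<forall>u::nat \<Rightarrow> real. (\<Sum>t<T. (u t)\<^sup>2) = 1 \<longrightarrow>
        subgaussian M (\<lambda>\<omega>. \<Sum>t<T. u t * X \<omega> t) \<nu>)"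

end

theory Submission
  imports Defs
begin


definition ip :: "nat \<Rightarrow> (nat \<Rightarrow> real) \<Rightarrow> (nat \<Rightarrow> real) \<Rightarrow> real" where
  "ip m x y = (\<Sum>t<m. x t * y t)"

definition cen :: "nat \<Rightarrow> (nat \<Rightarrow> real) \<Rightarrow> nat \<Rightarrow> real" where
  "cen T z = (\<lambda>s. \<Sum>t<T. centering T s t * z t)"

definition nz :: "nat \<Rightarrow> (nat \<Rightarrow> real) \<Rightarrow> real" where
  "nz m x = sqrt (ip m x x)"

definition nv :: "nat \<Rightarrow> (nat \<Rightarrow> real) \<Rightarrow> nat \<Rightarrow> real" where
  "nv m x = (\<lambda>t. x t / nz m x)"

lemma ip_sym: "ip m x y = ip m y x"
  unfolding ip_def by (simp add: mult.commute)

lemma ip_add_left: "ip m (\<lambda>t. x t + y t) z = ip m x z + ip m y z"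
  unfolding ip_def by (simp add: algebra_simps sum.distrib)

lemma ip_add_right: "ip m z (\<lambda>t. x t + y t) = ip m z x + ip m z y"
  unfolding ip_def by (simp add: algebra_simps sum.distrib)

lemma ip_diff_left: "ip m (\<lambda>t. x t - y t) z = ip m x z - ip m y z"
  unfolding ip_def by (simp add: algebra_simps sum_subtractf)

lemma ip_diff_right: "ip m z (\<lambda>t. x t - y t) = ip m z x - ip m z y"
  unfolding ip_def by (simp add: algebra_simps sum_subtractf)

lemma ip_scale_left: "ip m (\<lambda>t. c * x t) y = c * ip m x y"
  unfolding ip_def by (simp add: algebra_simps sum_distrib_left)

lemma ip_scale_right: "ip m y (\<lambda>t. c * x t) = c * ip m y x"
  unfolding ip_def by (simp add: algebra_simps sum_distrib_left)

lemma ip_div_left: "ip m (\<lambda>t. x t / c) y = ip m x y / c"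
  unfolding ip_def by (simp add: sum_divide_distrib)

lemma ip_div_right: "ip m y (\<lambda>t. x t / c) = ip m y x / c"
  unfolding ip_def by (simp add: sum_divide_distrib)

lemma ip_sum_left: "ip m (\<lambda>t. \<Sum>l\<in>L. f l t) y = (\<Sum>l\<in>L. ip m (f l) y)"
  unfolding ip_def by (simp add: sum_distrib_right) (rule sum.swap)

lemma ip_sum_right: "ip m y (\<lambda>t. \<Sum>l\<in>L. f l t) = (\<Sum>l\<in>L. ip m y (f l))"
  using ip_sum_left[of m f L y] by (simp add: ip_sym)

lemma ip_self_nonneg: "0 \<le> ip m x x"
  unfolding ip_def by (simp add: sum_nonneg)

lemma ip_cong: "(\<And>t. t < m \<Longrightarrow> x t = x' t) \<Longrightarrow> (\<And>t. t < m \<Longrightarrow> y t = y' t) \<Longrightarrow> ip m x y = ip m x' y'"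
  unfolding ip_def by (intro sum.cong) auto

lemma ip_CS: "\<bar>ip m x y\<bar> \<le> nz m x * nz m y"
proof -
  have "\<bar>ip m x y\<bar> \<le> (\<Sum>t<m. \<bar>x t\<bar> * \<bar>y t\<bar>)"
    unfolding ip_def by (metis (no_types, lifting) abs_mult sum.cong sum_abs)
  also have "\<dots> \<le> L2_set x {..<m} * L2_set y {..<m}" by (rule L2_set_mult_ineq)
  finally show ?thesis unfolding nz_def L2_set_def ip_def by (simp add: power2_eq_square)
qed

lemma nz_sq: "(nz m x)\<^sup>2 = ip m x x"
  unfolding nz_def using ip_self_nonneg by simp

lemma nz_nonneg: "0 \<le> nz m x" unfolding nz_def using ip_self_nonneg by simp

lemma cen_sym: "ip T x (cen T y) = ip T (cen T x) y"
proof -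
  have "ip T x (cen T y) = (\<Sum>s<T. \<Sum>t<T. x s * (centering T s t * y t))"
    unfolding ip_def cen_def by (simp add: sum_distrib_left)
  also have "\<dots> = (\<Sum>t<T. \<Sum>s<T. x s * (centering T s t * y t))"
    by (rule sum.swap)
  also have "\<dots> = ip T (cen T x) y"
    unfolding ip_def cen_def sum_distrib_right
    by (intro sum.cong refl) (simp add: centering_def algebra_simps)
  finally show ?thesis .
qed

lemma cen_cen: assumes "s < T" shows "cen T (cen T x) s = cen T x s"
proof -
  have T: "T > 0" using assms by simp
  have "cen T (cen T x) s = (\<Sum>t<T. ((if s = t then 1 else 0) - 1 / real T) *
          (\<Sum>r<T. ((if t = r then 1 else 0) - 1 / real T) * x r))"
    unfolding cen_def centering_def by simp
  also have "\<dots> = (\<Sum>r<T. (\<Sum>t<T. ((if s = t then 1 else 0) - 1 / real T) *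
          ((if t = r then 1 else 0) - 1 / real T)) * x r)"
    unfolding sum_distrib_left sum_distrib_right
    by (subst sum.swap) (simp add: algebra_simps)
  also have "\<dots> = (\<Sum>r<T. ((if s = r then 1 else 0) - 1 / real T) * x r)"
  proof (intro sum.cong refl)
    fix r assume r: "r \<in> {..<T}"
    have "(\<Sum>t<T. ((if s = t then 1 else 0) - 1 / real T) * ((if t = r then 1 else 0) - 1 / real T))
      = (\<Sum>t<T. (if s = t then 1 else 0) * (if t = r then 1 else 0) - (if s = t then 1 else 0) / real T
              - (if t = r then 1 else 0) / real T + 1 / (real T)^2)"
      by (intro sum.cong refl) (simp add: algebra_simps power2_eq_square)
    also have "\<dots> = (if s = r then 1 else 0) - 1 / real T - 1 / real T + real T / (real T)^2"
    proof -
      have a: "(\<Sum>t<T. (if s = t then 1 else 0) * (if t = r then 1 else (0::real))) = (if s = r then 1 else 0)"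
        using r assms by (simp add: if_distrib[of "\<lambda>a. a * _"] cong: if_cong)
      have b: "(\<Sum>t<T. (if s = t then 1 else 0) / real T) = 1 / real T"
        using assms by (simp add: if_distrib[of "\<lambda>a. a / _"] cong: if_cong)
      have c: "(\<Sum>t<T. (if t = r then 1 else 0) / real T) = 1 / real T"
        using r by (simp add: if_distrib[of "\<lambda>a. a / _"] cong: if_cong)
      show ?thesis using a b c by (simp add: sum_subtractf sum.distrib)
    qed
    also have "\<dots> = (if s = r then 1 else 0) - 1 / real T"
      using T by (simp add: power2_eq_square field_simps)
    finally show "(\<Sum>t<T. ((if s = t then 1 else 0) - 1 / real T) * ((if t = r then 1 else 0) - 1 / real T)) * x r
       = ((if s = r then 1 else 0) - 1 / real T) * x r" by simp
  qed
  also have "\<dots> = cen T x s" unfolding cen_def centering_def by simp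
  finally show ?thesis .
qed

lemma cen_add: "cen T (\<lambda>t. x t + y t) = (\<lambda>s. cen T x s + cen T y s)"
  unfolding cen_def by (simp add: algebra_simps sum.distrib)

lemma ip_cen_inv: assumes "\<And>s. s < T \<Longrightarrow> cen T u s = u s"
  shows "ip T u (cen T z) = ip T u z"
  using assms by (simp add: cen_sym cong: ip_cong)

lemma ip_cen_cen: "ip T (cen T x) (cen T y) = ip T x (cen T y)"
  by (metis cen_cen cen_sym ip_cen_inv)

lemma sig2_eq: "sig2 T Z i = ip T (cen T (Z i)) (cen T (Z i)) / real T"
  unfolding sig2_def ip_def cen_def by (simp add: power2_eq_square)

lemma corr_eq: assumes "T > 0"
  shows "corr T Z i j = ip T (nv T (cen T (Z i))) (nv T (cen T (Z j)))"
proof -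
  have 1: "(\<Sum>s<T. \<Sum>t<T. Z i s * centering T s t * Z j t) = ip T (cen T (Z i)) (cen T (Z j))"
    unfolding ip_cen_cen unfolding ip_def cen_def by (simp add: sum_distrib_left mult.assoc)
  have 2: "sqrt (sig2 T Z i) = nz T (cen T (Z i)) / sqrt (real T)" for i
    unfolding sig2_eq nz_def by (simp add: real_sqrt_divide)
  show ?thesis unfolding corr_def 1 2 nv_def ip_div_left ip_div_right
    using assms by (simp add: field_simps)
qed


lemma nv_ip_self: assumes "nz m x > 0" shows "ip m (nv m x) (nv m x) = 1"
proof -
  have "ip m (nv m x) (nv m x) = ip m x x / (nz m x * nz m x)"
    unfolding nv_def ip_div_left ip_div_right by simp
  also have "\<dots> = 1"
  proof -
    have "ip m x x > 0" using assms nz_sq[of m x] by (metis zero_less_power2 less_irrefl)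
    then show ?thesis using nz_sq[of m x] by (simp add: power2_eq_square)
  qed
  finally show ?thesis .
qed

lemma ip_nv_left: "ip m (nv m x) y = ip m x y / nz m x"
  unfolding nv_def ip_div_left by simp

lemma ip_nv_right: "ip m y (nv m x) = ip m y x / nz m x"
  unfolding nv_def ip_div_right by simp

lemma bessel:
  fixes U :: "nat \<Rightarrow> nat \<Rightarrow> real"
  assumes orth: "\<And>a b. a < d \<Longrightarrow> b < d \<Longrightarrow> (\<Sum>i<n. U i a * U i b) = (if a = b then 1 else 0)"
  shows "(\<Sum>a<d. (\<Sum>l<n. c l * U l a)\<^sup>2) \<le> (\<Sum>l<n. (c l)\<^sup>2)"
proof -
  define col where "col a = (\<lambda>l. U l a)" for a
  define \<beta> where "\<beta> a = ip n c (col a)" for a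
  have o: "ip n (col a) (col b) = (if a = b then 1 else 0)" if "a < d" "b < d" for a b
    using orth[OF that] unfolding ip_def col_def by simp
  define r where "r = (\<lambda>l. c l - (\<Sum>a<d. \<beta> a * col a l))"
  have "0 \<le> ip n r r" by (rule ip_self_nonneg)
  also have "ip n r r = ip n c c - 2 * (\<Sum>a<d. (\<beta> a)\<^sup>2) + (\<Sum>a<d. (\<beta> a)\<^sup>2)"
  proof -
    have s1: "ip n c (\<lambda>l. \<Sum>a<d. \<beta> a * col a l) = (\<Sum>a<d. (\<beta> a)\<^sup>2)"
      unfolding ip_sum_right ip_scale_right \<beta>_def by (simp add: power2_eq_square)
    have s2: "ip n (\<lambda>l. \<Sum>a<d. \<beta> a * col a l) (\<lambda>l. \<Sum>a<d. \<beta> a * col a l) = (\<Sum>a<d. (\<beta> a)\<^sup>2)"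
    proof -
      have "ip n (\<lambda>l. \<Sum>a<d. \<beta> a * col a l) (\<lambda>l. \<Sum>a<d. \<beta> a * col a l)
          = (\<Sum>a<d. \<Sum>b<d. \<beta> a * \<beta> b * ip n (col b) (col a))"
        unfolding ip_sum_right ip_sum_left ip_scale_right ip_scale_left
        by (simp add: sum_distrib_left sum_distrib_right mult.assoc)
      also have "\<dots> = (\<Sum>a<d. \<Sum>b<d. \<beta> a * \<beta> b * (if a = b then 1 else 0))"
        by (intro sum.cong refl) (auto simp add: o)
      also have "\<dots> = (\<Sum>a<d. (\<beta> a)\<^sup>2)"
        by (simp add: power2_eq_square if_distrib[of "\<lambda>x. _ * x"] cong: if_cong)
      finally show ?thesis .
    qed
    show ?thesis unfolding r_def ip_diff_left ip_diff_right s1 s2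
      using ip_sym[of n c "\<lambda>l. \<Sum>a<d. \<beta> a * col a l"] s1 by simp
  qed
  finally have "(\<Sum>a<d. (\<beta> a)\<^sup>2) \<le> ip n c c" by simp
  moreover have "\<beta> a = (\<Sum>l<n. c l * U l a)" for a unfolding \<beta>_def ip_def col_def by simp
  ultimately show ?thesis unfolding ip_def by (simp add: power2_eq_square)
qed


lemma L2_set_abs_mono:
  assumes "\<And>i. i \<in> K \<Longrightarrow> \<bar>f i\<bar> \<le> g i"
  shows "L2_set f K \<le> L2_set g K"
proof -
  have "L2_set f K = L2_set (\<lambda>i. \<bar>f i\<bar>) K" unfolding L2_set_def by simp
  also have "\<dots> \<le> L2_set g K" by (rule L2_set_mono) (use assms in auto)
  finally show ?thesis .
qed

lemma L2_set_affine:
  assumes "0 \<le> c" "0 \<le> b" "finite K"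
  shows "L2_set (\<lambda>i. c * \<bar>f i\<bar> + b) K \<le> c * L2_set f K + b * sqrt (card K)"
proof -
  have "L2_set (\<lambda>i. c * \<bar>f i\<bar> + b) K \<le> L2_set (\<lambda>i. c * \<bar>f i\<bar>) K + L2_set (\<lambda>i. b) K"
    by (rule L2_set_triangle_ineq)
  also have "L2_set (\<lambda>i. c * \<bar>f i\<bar>) K = c * L2_set (\<lambda>i. \<bar>f i\<bar>) K"
    by (rule L2_set_right_distrib[OF assms(1), symmetric])
  also have "L2_set (\<lambda>i. \<bar>f i\<bar>) K = L2_set f K" unfolding L2_set_def by simp
  also have "L2_set (\<lambda>i. b) K = b * sqrt (card K)" using assms by (simp add: L2_set_constant)
  finally show ?thesis .
qed

definition ww :: "nat \<Rightarrow> nat \<Rightarrow> (nat \<Rightarrow> nat \<Rightarrow> real) \<Rightarrow> (nat \<Rightarrow> nat \<Rightarrow> real) \<Rightarrow> (nat \<Rightarrow> real) \<Rightarrow> nat \<Rightarrow> nat \<Rightarrow> real" where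
  "ww T n x U lam a = (\<lambda>t. \<Sum>l<n. nv T (x l) t * (U l a / sqrt (lam a)))"

locale det =
  fixes T n d :: nat and x e U :: "nat \<Rightarrow> nat \<Rightarrow> real" and lam :: "nat \<Rightarrow> real" and \<theta> \<eta> :: real
  assumes s_pos: "\<And>i. i < n \<Longrightarrow> nz T (x i) > 0"
    and lam_pos: "\<And>a. a < d \<Longrightarrow> lam a > 0"
    and lam_sorted: "\<And>a b. a \<le> b \<Longrightarrow> b < d \<Longrightarrow> lam b \<le> lam a"
    and U_orth: "\<And>a b. a < d \<Longrightarrow> b < d \<Longrightarrow> (\<Sum>i<n. U i a * U i b) = (if a = b then 1 else 0)"
    and R_eig: "\<And>i j. i < n \<Longrightarrow> j < n \<Longrightarrow> ip T (nv T (x i)) (nv T (x j)) = (\<Sum>a<d. U i a * lam a * U j a)"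
    and e_small: "\<And>i. i < n \<Longrightarrow> ip T (e i) (e i) \<le> \<eta> * (nz T (x i))\<^sup>2"
    and ev: "\<And>i j. i < n \<Longrightarrow> j < n \<Longrightarrow> \<bar>ip T (nv T (x j)) (e i)\<bar> \<le> \<theta> * nz T (x i)"
    and ew: "\<And>i a. i < n \<Longrightarrow> a < d \<Longrightarrow> \<bar>ip T (ww T n x U lam a) (e i)\<bar> \<le> \<theta> * nz T (x i)"
    and small: "2 * \<theta> + \<eta> \<le> 1/2" and th_nn: "0 \<le> \<theta>" and eta_nn: "0 \<le> \<eta>"
    and d_pos: "0 < d"
begin

abbreviation v where "v i \<equiv> nv T (x i)"
abbreviation xh where "xh i \<equiv> (\<lambda>t. x i t + e i t)"
abbreviation vh where "vh i \<equiv> nv T (xh i)"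
abbreviation s where "s i \<equiv> nz T (x i)"
abbreviation sh where "sh i \<equiv> nz T (xh i)"
abbreviation w where "w a \<equiv> ww T n x U lam a"

lemma sh_facts:
  assumes i: "i < n"
  shows "s i / 2 \<le> sh i" "\<bar>sh i - s i\<bar> \<le> (2 * \<theta> + \<eta>) * s i"
proof -
  have sp: "s i > 0" using s_pos[OF i] .
  have xe: "ip T (x i) (e i) = s i * ip T (v i) (e i)"
    using sp by (simp add: ip_nv_left)
  have xe_b: "\<bar>ip T (x i) (e i)\<bar> \<le> \<theta> * (s i)\<^sup>2"
  proof -
    have "\<bar>ip T (x i) (e i)\<bar> = s i * \<bar>ip T (v i) (e i)\<bar>" using xe sp by (simp add: abs_mult)
    also have "\<dots> \<le> s i * (\<theta> * s i)" using ev[OF i i] sp by (intro mult_left_mono) auto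
    also have "s i * (\<theta> * s i) = \<theta> * (s i)\<^sup>2" by (simp add: power2_eq_square)
    finally show ?thesis .
  qed
  have sq: "(sh i)\<^sup>2 = (s i)\<^sup>2 + 2 * ip T (x i) (e i) + ip T (e i) (e i)"
    unfolding nz_sq ip_add_left ip_add_right using ip_sym[of T "x i" "e i"] by simp
  have ee: "0 \<le> ip T (e i) (e i)" "ip T (e i) (e i) \<le> \<eta> * (s i)\<^sup>2"
    using ip_self_nonneg e_small[OF i] by auto
  have d2: "\<bar>(sh i)\<^sup>2 - (s i)\<^sup>2\<bar> \<le> (2 * \<theta> + \<eta>) * (s i)\<^sup>2"
    using sq xe_b ee by (simp add: algebra_simps abs_le_iff)
  have "(s i / 2)\<^sup>2 \<le> (sh i)\<^sup>2"
  proof -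
    have "(2 * \<theta> + \<eta>) * (s i)\<^sup>2 \<le> 1/2 * (s i)\<^sup>2" using small by (intro mult_right_mono) auto
    then show ?thesis using d2 by (simp add: power_divide abs_le_iff)
  qed
  then show 1: "s i / 2 \<le> sh i" using nz_nonneg by (rule power2_le_imp_le)
  have "\<bar>sh i - s i\<bar> * (sh i + s i) = \<bar>(sh i)\<^sup>2 - (s i)\<^sup>2\<bar>"
  proof -
    have "(sh i)\<^sup>2 - (s i)\<^sup>2 = (sh i - s i) * (sh i + s i)" by (simp add: power2_eq_square algebra_simps)
    moreover have "0 \<le> sh i + s i" using nz_nonneg[of T "xh i"] sp by simp
    ultimately show ?thesis by (simp add: abs_mult)
  qed
  also have "\<dots> \<le> (2 * \<theta> + \<eta>) * s i * s i" using d2 by (simp add: power2_eq_square)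
  finally have "\<bar>sh i - s i\<bar> * (sh i + s i) \<le> (2 * \<theta> + \<eta>) * s i * s i" .
  moreover have "s i \<le> sh i + s i" using nz_nonneg[of T "xh i"] by simp
  moreover have "0 \<le> \<bar>sh i - s i\<bar>" by simp
  ultimately have "\<bar>sh i - s i\<bar> * s i \<le> (2 * \<theta> + \<eta>) * s i * s i"
    by (meson mult_left_mono order_trans)
  then show "\<bar>sh i - s i\<bar> \<le> (2 * \<theta> + \<eta>) * s i" using sp by simp
qed

lemma gen:
  assumes i: "i < n" and ue: "\<bar>ip T u (e i)\<bar> \<le> \<theta> * s i"
  shows "\<bar>ip T u (vh i) - ip T u (v i)\<bar> \<le> \<bar>ip T u (v i)\<bar> * (2 * (2 * \<theta> + \<eta>)) + 2 * \<theta>"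
proof -
  have sp: "s i > 0" using s_pos[OF i] .
  note shf = sh_facts[OF i]
  have shp: "sh i > 0" using shf(1) sp by linarith
  define q where "q = ip T u (v i)"
  have ux: "ip T u (x i) = s i * q" unfolding q_def using sp by (simp add: ip_nv_right)
  have "ip T u (vh i) = (ip T u (x i) + ip T u (e i)) / sh i"
    by (simp add: ip_nv_right ip_add_right)
  then have eq: "ip T u (vh i) - ip T u (v i) = q * ((s i - sh i) / sh i) + ip T u (e i) / sh i"
    unfolding ux q_def[symmetric] using shp by (simp add: field_simps)
  have r: "s i / sh i \<le> 2" using shf(1) shp by (simp add: field_simps)
  have a1: "\<bar>q * ((s i - sh i) / sh i)\<bar> \<le> \<bar>q\<bar> * (2 * (2 * \<theta> + \<eta>))"
  proof -
    have "\<bar>(s i - sh i) / sh i\<bar> = \<bar>sh i - s i\<bar> / sh i" using shp by (simp add: abs_minus_commute)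
    also have "\<dots> \<le> (2 * \<theta> + \<eta>) * s i / sh i" using shf(2) shp by (simp add: divide_right_mono)
    also have "\<dots> = (2 * \<theta> + \<eta>) * (s i / sh i)" by simp
    also have "\<dots> \<le> (2 * \<theta> + \<eta>) * 2" using r th_nn eta_nn by (intro mult_left_mono) auto
    finally have h: "\<bar>(s i - sh i) / sh i\<bar> \<le> 2 * (2 * \<theta> + \<eta>)" by linarith
    show ?thesis unfolding abs_mult by (rule mult_left_mono[OF h abs_ge_zero])
  qed
  have a2: "\<bar>ip T u (e i) / sh i\<bar> \<le> 2 * \<theta>"
  proof -
    have "\<bar>ip T u (e i) / sh i\<bar> = \<bar>ip T u (e i)\<bar> / sh i" using shp by simp
    also have "\<dots> \<le> \<theta> * s i / sh i" using ue shp by (simp add: divide_right_mono)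
    also have "\<dots> = \<theta> * (s i / sh i)" by simp
    also have "\<dots> \<le> \<theta> * 2" using r th_nn by (intro mult_left_mono) auto
    finally show ?thesis by simp
  qed
  have "\<bar>ip T u (vh i) - ip T u (v i)\<bar> = \<bar>q * ((s i - sh i) / sh i) + ip T u (e i) / sh i\<bar>"
    using eq by simp
  also have "\<dots> \<le> \<bar>q * ((s i - sh i) / sh i)\<bar> + \<bar>ip T u (e i) / sh i\<bar>" by (rule abs_triangle_ineq)
  finally show ?thesis using a1 a2 unfolding q_def by linarith
qed

end


lemma ip_lincomb: "ip m (\<lambda>t. \<Sum>l\<in>L. f l t * c l) y = (\<Sum>l\<in>L. c l * ip m (f l) y)"
  unfolding ip_def by (simp add: sum_distrib_right sum_distrib_left mult_ac) (rule sum.swap)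

lemma sum_if_eq: assumes "a \<in> A" "finite A"
  shows "(\<Sum>b\<in>A. (if a = b then 1 else 0) * g b) = (g a :: real)"
  using assms by (simp add: if_distrib[of "\<lambda>x. x * _"] cong: if_cong)

context det
begin

lemma v_unit: "i < n \<Longrightarrow> ip T (v i) (v i) = 1"
  using s_pos by (simp add: nv_ip_self)

lemma sh_pos: "i < n \<Longrightarrow> sh i > 0"
  using sh_facts(1)[of i] s_pos[of i] by linarith

lemma vh_unit: "i < n \<Longrightarrow> ip T (vh i) (vh i) = 1"
  using sh_pos by (simp add: nv_ip_self)

lemma delta_sq:
  assumes i: "i < n"
  shows "ip T (\<lambda>t. vh i t - v i t) (\<lambda>t. vh i t - v i t) \<le> 4 * (3 * \<theta> + \<eta>)"
proof -
  have g: "\<bar>ip T (v i) (vh i) - ip T (v i) (v i)\<bar> \<le> \<bar>ip T (v i) (v i)\<bar> * (2 * (2 * \<theta> + \<eta>)) + 2 * \<theta>"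
    by (rule gen[OF i ev[OF i i]])
  have "ip T (\<lambda>t. vh i t - v i t) (\<lambda>t. vh i t - v i t)
      = ip T (vh i) (vh i) - 2 * ip T (v i) (vh i) + ip T (v i) (v i)"
    unfolding ip_diff_left ip_diff_right using ip_sym[of T "v i" "vh i"] by simp
  also have "\<dots> = 2 - 2 * ip T (v i) (vh i)" using v_unit[OF i] vh_unit[OF i] by simp
  finally show ?thesis using g v_unit[OF i] by (simp add: abs_le_iff)
qed

lemma delta_ip:
  assumes i: "i < n" and l: "l < n"
  shows "\<bar>ip T (\<lambda>t. vh i t - v i t) (\<lambda>t. vh l t - v l t)\<bar> \<le> 4 * (3 * \<theta> + \<eta>)"
proof -
  have "\<bar>ip T (\<lambda>t. vh i t - v i t) (\<lambda>t. vh l t - v l t)\<bar>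
     \<le> nz T (\<lambda>t. vh i t - v i t) * nz T (\<lambda>t. vh l t - v l t)" by (rule ip_CS)
  also have "\<dots> \<le> sqrt (4 * (3 * \<theta> + \<eta>)) * sqrt (4 * (3 * \<theta> + \<eta>))"
    unfolding nz_def using th_nn eta_nn ip_self_nonneg
    by (intro mult_mono real_sqrt_le_mono delta_sq i l) auto
  also have "\<dots> = 4 * (3 * \<theta> + \<eta>)" using th_nn eta_nn by simp
  finally show ?thesis .
qed

lemma w_v:
  assumes a: "a < d" and i: "i < n"
  shows "ip T (w a) (v i) = U i a * sqrt (lam a)"
proof -
  have "ip T (w a) (v i) = (\<Sum>l<n. (U l a / sqrt (lam a)) * ip T (v l) (v i))"
    unfolding ww_def by (rule ip_lincomb)
  also have "\<dots> = (\<Sum>l<n. (U l a / sqrt (lam a)) * (\<Sum>b<d. U l b * lam b * U i b))"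
    by (intro sum.cong refl) (simp add: R_eig i)
  also have "\<dots> = (\<Sum>b<d. (\<Sum>l<n. U l a * U l b) * (lam b * U i b / sqrt (lam a)))"
    by (simp add: sum_distrib_left sum_distrib_right mult_ac) (rule sum.swap)
  also have "\<dots> = (\<Sum>b<d. (if a = b then 1 else 0) * (lam b * U i b / sqrt (lam a)))"
    by (intro sum.cong refl) (simp add: U_orth a)
  also have "\<dots> = lam a * U i a / sqrt (lam a)" using a by (subst sum_if_eq) auto
  also have "\<dots> = U i a * sqrt (lam a)"
    using lam_pos[OF a] by (simp add: field_simps real_sqrt_mult[symmetric] del: real_sqrt_mult)
  finally show ?thesis .
qed

lemma w_v_L2: assumes i: "i < n" shows "L2_set (\<lambda>a. ip T (w a) (v i)) {..<d} = 1"
proof -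
  have "(\<Sum>a<d. (ip T (w a) (v i))\<^sup>2) = (\<Sum>a<d. U i a * lam a * U i a)"
  proof (intro sum.cong refl)
    fix a assume "a \<in> {..<d}"
    then have "lam a > 0" using lam_pos by simp
    then show "(ip T (w a) (v i))\<^sup>2 = U i a * lam a * U i a"
      using \<open>a \<in> {..<d}\<close> by (simp add: w_v i power_mult_distrib power2_eq_square)
  qed
  also have "\<dots> = 1" using R_eig[OF i i] v_unit[OF i] by simp
  finally show ?thesis unfolding L2_set_def by simp
qed

lemma bessel_scaled:
  "L2_set (\<lambda>a. \<Sum>l<n. c l * (U l a / sqrt (lam a))) {..<d} \<le> L2_set c {..<n} / sqrt (lam (d - 1))"
proof -
  define \<beta> where "\<beta> a = (\<Sum>l<n. c l * U l a)" for a
  have ld: "lam (d - 1) > 0" using lam_pos d_pos by simp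
  have "(\<Sum>a<d. (\<Sum>l<n. c l * (U l a / sqrt (lam a)))\<^sup>2) = (\<Sum>a<d. (\<beta> a)\<^sup>2 / lam a)"
  proof (intro sum.cong refl)
    fix a assume a: "a \<in> {..<d}"
    have "(\<Sum>l<n. c l * (U l a / sqrt (lam a))) = \<beta> a / sqrt (lam a)"
      unfolding \<beta>_def by (simp add: sum_divide_distrib)
    then show "(\<Sum>l<n. c l * (U l a / sqrt (lam a)))\<^sup>2 = (\<beta> a)\<^sup>2 / lam a"
      using lam_pos[of a] a by (simp add: power_divide)
  qed
  also have "\<dots> \<le> (\<Sum>a<d. (\<beta> a)\<^sup>2 / lam (d - 1))"
  proof (intro sum_mono)
    fix a assume a: "a \<in> {..<d}"
    have "lam (d - 1) \<le> lam a" using a by (intro lam_sorted) auto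
    then show "(\<beta> a)\<^sup>2 / lam a \<le> (\<beta> a)\<^sup>2 / lam (d - 1)"
      using ld by (intro divide_left_mono) auto
  qed
  also have "\<dots> = (\<Sum>a<d. (\<beta> a)\<^sup>2) / lam (d - 1)" by (simp add: sum_divide_distrib)
  also have "\<dots> \<le> (\<Sum>l<n. (c l)\<^sup>2) / lam (d - 1)"
    unfolding \<beta>_def using ld by (intro divide_right_mono bessel U_orth) auto
  finally have "(\<Sum>a<d. (\<Sum>l<n. c l * (U l a / sqrt (lam a)))\<^sup>2) \<le> (\<Sum>l<n. (c l)\<^sup>2) / lam (d - 1)" .
  then have "sqrt (\<Sum>a<d. (\<Sum>l<n. c l * (U l a / sqrt (lam a)))\<^sup>2) \<le> sqrt ((\<Sum>l<n. (c l)\<^sup>2) / lam (d - 1))"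
    by (rule real_sqrt_le_mono)
  also have "\<dots> = sqrt (\<Sum>l<n. (c l)\<^sup>2) / sqrt (lam (d - 1))" by (rule real_sqrt_divide)
  finally show ?thesis unfolding L2_set_def .
qed

end


context det
begin

lemma det_main:
  assumes i: "i < n"
  shows "L2_set (\<lambda>a. \<Sum>l<n. (ip T (vh i) (vh l) - ip T (v i) (v l)) * (U l a / sqrt (lam a))) {..<d}
    \<le> 2 * (2 * \<theta> + \<eta>) + 2 * \<theta> * sqrt (real d)
       + (2 * (2 * \<theta> + \<eta>) * L2_set (\<lambda>l. ip T (v i) (v l)) {..<n} + 2 * \<theta> * sqrt (real n)
          + 4 * (3 * \<theta> + \<eta>) * sqrt (real n)) / sqrt (lam (d - 1))"
proof -
  define c where "c = 2 * (2 * \<theta> + \<eta>)"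
  have c0: "0 \<le> c" unfolding c_def using th_nn eta_nn by simp
  define \<delta> where "\<delta> l = (\<lambda>t. vh l t - v l t)" for l
  define Y where "Y l a = U l a / sqrt (lam a)" for l a
  define g where "g l = ip T (v i) (vh l) - ip T (v i) (v l)" for l
  define h where "h l = ip T (\<delta> i) (\<delta> l)" for l
  define f1 where "f1 a = (\<Sum>l<n. ip T (\<delta> i) (v l) * Y l a)" for a
  define f2 where "f2 a = (\<Sum>l<n. g l * Y l a)" for a
  define f3 where "f3 a = (\<Sum>l<n. h l * Y l a)" for a
  have pt: "ip T (vh i) (vh l) - ip T (v i) (v l) = ip T (\<delta> i) (v l) + g l + h l" for l
    unfolding \<delta>_def g_def h_def ip_diff_left ip_diff_right
    using ip_sym[of T "v i" "vh l"] ip_sym[of T "vh i" "v l"] by simp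
  have F: "(\<Sum>l<n. (ip T (vh i) (vh l) - ip T (v i) (v l)) * (U l a / sqrt (lam a))) = f1 a + f2 a + f3 a" for a
    unfolding f1_def f2_def f3_def pt Y_def by (simp add: sum.distrib algebra_simps)
  have L2F: "L2_set (\<lambda>a. f1 a + f2 a + f3 a) {..<d} \<le> L2_set f1 {..<d} + L2_set f2 {..<d} + L2_set f3 {..<d}"
    using L2_set_triangle_ineq[of "\<lambda>a. f1 a + f2 a" f3 "{..<d}"] L2_set_triangle_ineq[of f1 f2 "{..<d}"]
    by linarith
  have f1w: "f1 a = ip T (w a) (vh i) - ip T (w a) (v i)" for a
  proof -
    have "f1 a = (\<Sum>l<n. Y l a * ip T (v l) (\<delta> i))" unfolding f1_def by (simp add: ip_sym mult.commute)
    also have "\<dots> = ip T (w a) (\<delta> i)" unfolding ww_def Y_def by (rule ip_lincomb[symmetric])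
    finally show ?thesis unfolding \<delta>_def ip_diff_right .
  qed
  have L2f1: "L2_set f1 {..<d} \<le> c + 2 * \<theta> * sqrt (real d)"
  proof -
    have "L2_set f1 {..<d} \<le> L2_set (\<lambda>a. c * \<bar>ip T (w a) (v i)\<bar> + 2 * \<theta>) {..<d}"
    proof (rule L2_set_abs_mono)
      fix a assume "a \<in> {..<d}"
      then have "\<bar>ip T (w a) (vh i) - ip T (w a) (v i)\<bar> \<le> \<bar>ip T (w a) (v i)\<bar> * c + 2 * \<theta>"
        unfolding c_def using ew[OF i] by (intro gen[OF i]) auto
      then show "\<bar>f1 a\<bar> \<le> c * \<bar>ip T (w a) (v i)\<bar> + 2 * \<theta>" unfolding f1w by (simp add: mult.commute)
    qed
    also have "\<dots> \<le> c * L2_set (\<lambda>a. ip T (w a) (v i)) {..<d} + 2 * \<theta> * sqrt (card {..<d})"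
      using c0 th_nn by (intro L2_set_affine) auto
    finally show ?thesis using w_v_L2[OF i] by simp
  qed
  have L2g: "L2_set g {..<n} \<le> c * L2_set (\<lambda>l. ip T (v i) (v l)) {..<n} + 2 * \<theta> * sqrt (real n)"
  proof -
    have "L2_set g {..<n} \<le> L2_set (\<lambda>l. c * \<bar>ip T (v i) (v l)\<bar> + 2 * \<theta>) {..<n}"
    proof (rule L2_set_abs_mono)
      fix l assume "l \<in> {..<n}"
      then have "\<bar>g l\<bar> \<le> \<bar>ip T (v i) (v l)\<bar> * c + 2 * \<theta>"
        unfolding c_def g_def using ev[OF _ i] by (intro gen) auto
      then show "\<bar>g l\<bar> \<le> c * \<bar>ip T (v i) (v l)\<bar> + 2 * \<theta>" by (simp add: mult.commute)
    qed
    also have "\<dots> \<le> c * L2_set (\<lambda>l. ip T (v i) (v l)) {..<n} + 2 * \<theta> * sqrt (card {..<n})"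
      using c0 th_nn by (intro L2_set_affine) auto
    finally show ?thesis by simp
  qed
  have L2f2: "L2_set f2 {..<d} \<le> L2_set g {..<n} / sqrt (lam (d - 1))"
    unfolding f2_def Y_def by (rule bessel_scaled)
  have L2h: "L2_set h {..<n} \<le> 4 * (3 * \<theta> + \<eta>) * sqrt (real n)"
  proof -
    have "L2_set h {..<n} \<le> L2_set (\<lambda>l. 4 * (3 * \<theta> + \<eta>)) {..<n}"
      unfolding h_def \<delta>_def by (rule L2_set_abs_mono) (use delta_ip[OF i] in auto)
    also have "\<dots> = 4 * (3 * \<theta> + \<eta>) * sqrt (real n)"
      using th_nn eta_nn by (simp add: L2_set_constant)
    finally show ?thesis .
  qed
  have L2f3: "L2_set f3 {..<d} \<le> L2_set h {..<n} / sqrt (lam (d - 1))"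
    unfolding f3_def Y_def by (rule bessel_scaled)
  have ld: "0 < sqrt (lam (d - 1))" using lam_pos d_pos by simp
  have "L2_set f2 {..<d} + L2_set f3 {..<d} \<le>
     (c * L2_set (\<lambda>l. ip T (v i) (v l)) {..<n} + 2 * \<theta> * sqrt (real n) + 4 * (3 * \<theta> + \<eta>) * sqrt (real n)) / sqrt (lam (d - 1))"
  proof -
    have "L2_set f2 {..<d} + L2_set f3 {..<d} \<le> (L2_set g {..<n} + L2_set h {..<n}) / sqrt (lam (d - 1))"
      using L2f2 L2f3 by (simp add: add_divide_distrib)
    also have "\<dots> \<le> (c * L2_set (\<lambda>l. ip T (v i) (v l)) {..<n} + 2 * \<theta> * sqrt (real n) + 4 * (3 * \<theta> + \<eta>) * sqrt (real n)) / sqrt (lam (d - 1))"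
      using L2g L2h ld by (intro divide_right_mono) auto
    finally show ?thesis .
  qed
  then show ?thesis unfolding F using L2F L2f1 unfolding c_def by linarith
qed

end


lemma sq_bound:
  fixes a b c :: real
  assumes "0 \<le> a" "0 \<le> b" "0 \<le> c" "a\<^sup>2 \<le> c * b\<^sup>2"
  shows "a \<le> sqrt c * b"
proof -
  have "a = sqrt (a\<^sup>2)" using assms by simp
  also have "\<dots> \<le> sqrt (c * b\<^sup>2)" using assms by (intro real_sqrt_le_mono)
  also have "\<dots> = sqrt c * b" using assms by (simp add: real_sqrt_mult)
  finally show ?thesis .
qed

locale fin =
  fixes n d lam g T L l K c1 rho :: real
  assumes d1: "1 \<le> d" and lam0: "0 < lam" and g0: "0 < g" and T0: "0 < T" and L0: "0 \<le> L" and l0: "0 \<le> l"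
    and K0: "0 \<le> K" and Kl: "K \<le> c1 * l" and lL: "l \<le> 2 * L" and dlam: "d * lam \<le> n"
    and nrho: "n \<le> d * rho\<^sup>2" and rho0: "0 \<le> rho" and c10: "0 \<le> c1"
begin

definition "\<theta> = sqrt (K / (g * T))"
definition "\<eta> = K / g"
definition "A = sqrt (d * L / (g * lam))"
definition "P = A * sqrt (l / g) * rho"
definition "Q = A * sqrt (1 / T) * rho"

lemma th0: "0 \<le> \<theta>" unfolding \<theta>_def using K0 g0 T0 by simp
lemma eta0: "0 \<le> \<eta>" unfolding \<eta>_def using K0 g0 by simp
lemma A0: "0 \<le> A" unfolding A_def using d1 L0 g0 lam0 by simp
lemma P0: "0 \<le> P" unfolding P_def using A0 l0 g0 rho0 by simp
lemma Q0: "0 \<le> Q" unfolding Q_def using A0 T0 rho0 by simp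

lemma Q2: "Q\<^sup>2 = d * L * rho\<^sup>2 / (g * lam * T)"
  unfolding Q_def A_def using d1 L0 g0 lam0 T0 by (simp add: power_mult_distrib)

lemma P2: "P\<^sup>2 = d * L * l * rho\<^sup>2 / (g * g * lam)"
  unfolding P_def A_def using d1 L0 g0 lam0 l0 by (simp add: power_mult_distrib)

lemma th_X:
  assumes X0: "0 \<le> X" and X: "X\<^sup>2 \<le> d * rho\<^sup>2 / lam"
  shows "\<theta> * X \<le> sqrt (2 * c1) * Q"
proof (rule sq_bound)
  show "0 \<le> \<theta> * X" using th0 X0 by simp
  show "0 \<le> Q" by (rule Q0)
  show "0 \<le> 2 * c1" using c10 by simp
  have "(\<theta> * X)\<^sup>2 = K * X\<^sup>2 / (g * T)" unfolding \<theta>_def using K0 g0 T0 by (simp add: power_mult_distrib)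
  also have "\<dots> \<le> (2 * c1 * L) * (d * rho\<^sup>2 / lam) / (g * T)"
  proof -
    have "K \<le> 2 * c1 * L" using Kl lL c10 by (metis mult.assoc mult.left_commute mult_left_mono order_trans)
    then show ?thesis using K0 X g0 T0 c10 L0 by (intro divide_right_mono mult_mono) auto
  qed
  also have "\<dots> = 2 * c1 * Q\<^sup>2" unfolding Q2 by (simp add: field_simps)
  finally show "(\<theta> * X)\<^sup>2 \<le> 2 * c1 * Q\<^sup>2" .
qed

lemma eta_X:
  assumes X0: "0 \<le> X" and X: "X\<^sup>2 \<le> d * rho\<^sup>2 / lam"
  shows "\<eta> * X \<le> sqrt (2 * c1\<^sup>2) * P"
proof (rule sq_bound)
  show "0 \<le> \<eta> * X" using eta0 X0 by simp
  show "0 \<le> P" by (rule P0)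
  show "0 \<le> 2 * c1\<^sup>2" by simp
  have "(\<eta> * X)\<^sup>2 = K\<^sup>2 * X\<^sup>2 / (g * g)" unfolding \<eta>_def by (simp add: power_mult_distrib power2_eq_square)
  also have "\<dots> \<le> (2 * c1\<^sup>2 * L * l) * (d * rho\<^sup>2 / lam) / (g * g)"
  proof -
    have "K\<^sup>2 \<le> (c1 * l)\<^sup>2" using K0 Kl by (intro power_mono) auto
    also have "(c1 * l)\<^sup>2 = c1\<^sup>2 * (l * l)" by (simp add: power2_eq_square)
    also have "\<dots> \<le> c1\<^sup>2 * (2 * L * l)" using lL l0 by (intro mult_left_mono mult_right_mono) auto
    finally have "K\<^sup>2 \<le> 2 * c1\<^sup>2 * L * l" by simp
    then show ?thesis using X g0 L0 l0 c10 by (intro divide_right_mono mult_mono) auto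
  qed
  also have "\<dots> = 2 * c1\<^sup>2 * P\<^sup>2" unfolding P2 by (simp add: field_simps)
  finally show "(\<eta> * X)\<^sup>2 \<le> 2 * c1\<^sup>2 * P\<^sup>2" .
qed

lemma rho_lam: "lam \<le> rho\<^sup>2"
proof -
  have "d * lam \<le> d * rho\<^sup>2" using dlam nrho by simp
  then show ?thesis using d1 by simp
qed

lemma X1: "1\<^sup>2 \<le> d * rho\<^sup>2 / lam"
proof -
  have "1 \<le> rho\<^sup>2 / lam" using rho_lam lam0 by simp
  also have "\<dots> \<le> d * (rho\<^sup>2 / lam)" using mult_right_mono[OF d1, of "rho\<^sup>2 / lam"] lam0 by simp
  finally show ?thesis by simp
qed

lemma final:
  assumes ri0: "0 \<le> rhoi" and ri: "rhoi \<le> rho"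
  shows "2 * (2 * \<theta> + \<eta>) + 2 * \<theta> * sqrt d
       + (2 * (2 * \<theta> + \<eta>) * rhoi + 2 * \<theta> * sqrt n + 4 * (3 * \<theta> + \<eta>) * sqrt n) / sqrt lam
     \<le> (40 * (c1 + 1)) * sqrt (d * L / (g * lam)) * (1 + (sqrt (l / g) + sqrt (1 / T)) * rho)"
proof -
  define a where "a = sqrt (2 * c1)"
  define b where "b = sqrt (2 * c1\<^sup>2)"
  have sl: "0 < sqrt lam" using lam0 by simp
  have r1: "1 \<le> rho\<^sup>2 / lam" using rho_lam lam0 by simp
  have dd: "x \<le> d * x" if "0 \<le> x" for x using mult_right_mono[OF d1 that] by simp
  have n0: "0 \<le> n" using dlam d1 lam0 by (smt (verit) mult_nonneg_nonneg)
  have Xd: "(sqrt d)\<^sup>2 \<le> d * rho\<^sup>2 / lam"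
    using d1 mult_left_mono[OF r1, of d] by simp
  have Xr: "(rhoi / sqrt lam)\<^sup>2 \<le> d * rho\<^sup>2 / lam"
  proof -
    have "(rhoi / sqrt lam)\<^sup>2 = rhoi\<^sup>2 / lam" using lam0 by (simp add: power_divide)
    also have "\<dots> \<le> rho\<^sup>2 / lam" using ri ri0 lam0 by (intro divide_right_mono power_mono) auto
    also have "\<dots> \<le> d * rho\<^sup>2 / lam" using dd[of "rho\<^sup>2 / lam"] lam0 by simp
    finally show ?thesis .
  qed
  have Xn: "(sqrt n / sqrt lam)\<^sup>2 \<le> d * rho\<^sup>2 / lam"
    using n0 lam0 nrho by (simp add: power_divide divide_right_mono)
  have t1: "\<theta> * 1 \<le> a * Q" unfolding a_def by (rule th_X) (use X1 in auto)
  have t2: "\<theta> * sqrt d \<le> a * Q" unfolding a_def by (rule th_X) (use Xd d1 in auto)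
  have t3: "\<theta> * (rhoi / sqrt lam) \<le> a * Q" unfolding a_def by (rule th_X) (use Xr ri0 lam0 in auto)
  have t4: "\<theta> * (sqrt n / sqrt lam) \<le> a * Q" unfolding a_def by (rule th_X) (use Xn n0 lam0 in auto)
  have e1: "\<eta> * 1 \<le> b * P" unfolding b_def by (rule eta_X) (use X1 in auto)
  have e3: "\<eta> * (rhoi / sqrt lam) \<le> b * P" unfolding b_def by (rule eta_X) (use Xr ri0 lam0 in auto)
  have e4: "\<eta> * (sqrt n / sqrt lam) \<le> b * P" unfolding b_def by (rule eta_X) (use Xn n0 lam0 in auto)
  have split: "2 * (2 * \<theta> + \<eta>) + 2 * \<theta> * sqrt d
       + (2 * (2 * \<theta> + \<eta>) * rhoi + 2 * \<theta> * sqrt n + 4 * (3 * \<theta> + \<eta>) * sqrt n) / sqrt lam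
     = 4 * (\<theta> * 1) + 2 * (\<eta> * 1) + 2 * (\<theta> * sqrt d) + 4 * (\<theta> * (rhoi / sqrt lam)) + 2 * (\<eta> * (rhoi / sqrt lam))
       + 14 * (\<theta> * (sqrt n / sqrt lam)) + 4 * (\<eta> * (sqrt n / sqrt lam))"
    using sl by (simp add: field_simps)
  have "\<dots> \<le> 24 * (a * Q) + 8 * (b * P)" using t1 t2 t3 t4 e1 e3 e4 by linarith
  also have "\<dots> \<le> 24 * ((c1 + 1) * Q) + 8 * ((2 * c1) * P)"
  proof -
    have "a \<le> c1 + 1" unfolding a_def
    proof (rule real_le_lsqrt)
      show "0 \<le> c1 + 1" using c10 by auto
      show "2 * c1 \<le> (c1 + 1)\<^sup>2" by (simp add: power2_eq_square algebra_simps)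
    qed
    moreover have "b \<le> 2 * c1" unfolding b_def
    proof (rule real_le_lsqrt)
      show "0 \<le> 2 * c1" using c10 by auto
      show "2 * c1\<^sup>2 \<le> (2 * c1)\<^sup>2" by (simp add: power2_eq_square)
    qed
    ultimately show ?thesis using P0 Q0 by (intro add_mono mult_left_mono mult_right_mono) auto
  qed
  also have "\<dots> \<le> (40 * (c1 + 1)) * (A + P + Q)" using P0 Q0 A0 c10 by (simp add: algebra_simps)
  also have "\<dots> = (40 * (c1 + 1)) * sqrt (d * L / (g * lam)) * (1 + (sqrt (l / g) + sqrt (1 / T)) * rho)"
    unfolding P_def Q_def A_def by (simp add: algebra_simps)
  finally show ?thesis using split by simp
qed

end


lemma pow_div_fact_le_exp:
  fixes y :: real assumes "0 \<le> y" shows "y ^ m / fact m \<le> exp y"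
proof -
  have s: "(\<lambda>k. y ^ k / fact k) sums exp y" using exp_converges[of y] by (simp add: divide_inverse mult.commute)
  have "(\<Sum>k\<in>{m}. y ^ k / fact k) \<le> suminf (\<lambda>k. y ^ k / fact k)"
    by (rule sum_le_suminf) (use s assms in \<open>auto simp: sums_iff\<close>)
  then show ?thesis using s by (simp add: sums_iff)
qed

lemma even_pow_le_cosh:
  fixes y :: real shows "y ^ (2 * p) \<le> fact (2 * p) * (exp y + exp (- y))"
proof -
  have "\<bar>y\<bar> ^ (2 * p) / fact (2 * p) \<le> exp \<bar>y\<bar>" by (rule pow_div_fact_le_exp) simp
  moreover have "exp \<bar>y\<bar> \<le> exp y + exp (- y)" by (cases "y \<ge> 0") auto
  moreover have "\<bar>y\<bar> ^ (2 * p) = y ^ (2 * p)" by (simp add: power_mult power2_abs)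
  ultimately have "y ^ (2 * p) / fact (2 * p) \<le> exp y + exp (- y)" by simp
  then show ?thesis by (simp add: divide_le_eq mult.commute)
qed

lemma aux_alg: "(a::real) > 0 \<Longrightarrow> V > 0 \<Longrightarrow> 2 * (a * a) * e / (a / V) = 2 * (a * e * V)"
  by (simp add: field_simps)

lemma subg_moment:
  assumes M: "prob_space M" and sg: "subgaussian M X \<nu>" and \<nu>: "0 < \<nu>" and p: "0 < p"
  shows "integrable M (\<lambda>\<omega>. X \<omega> ^ (2 * p))"
    and "(\<integral>\<omega>. X \<omega> ^ (2 * p) \<partial>M) \<le> 2 * (2 * exp 1 * real p * \<nu>) ^ p"
proof -
  interpret prob_space M by (rule M)
  have Xm: "X \<in> borel_measurable M" and ints: "\<And>s. integrable M (\<lambda>\<omega>. exp (s * X \<omega>))"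
    and mgf: "\<And>s. (\<integral>\<omega>. exp (s * X \<omega>) \<partial>M) \<le> exp (\<nu> * s\<^sup>2 / 2)"
    using sg unfolding subgaussian_def by auto
  define s where "s = sqrt (2 * real p / \<nu>)"
  have s0: "0 < s" unfolding s_def using \<nu> p by simp
  have s2: "s\<^sup>2 = 2 * real p / \<nu>" unfolding s_def using \<nu> p by simp
  define B where "B \<omega> = fact (2 * p) * (exp (s * X \<omega>) + exp ((- s) * X \<omega>)) / s ^ (2 * p)" for \<omega>
  have intB: "integrable M B" unfolding B_def
    by (intro integrable_divide integrable_mult_right Bochner_Integration.integrable_add ints)
  have le: "X \<omega> ^ (2 * p) \<le> B \<omega>" for \<omega>
  proof -
    have "(s * X \<omega>) ^ (2 * p) \<le> fact (2 * p) * (exp (s * X \<omega>) + exp (- (s * X \<omega>)))"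
      by (rule even_pow_le_cosh)
    then have "s ^ (2 * p) * X \<omega> ^ (2 * p) \<le> fact (2 * p) * (exp (s * X \<omega>) + exp ((- s) * X \<omega>))"
      by (simp add: power_mult_distrib)
    then show ?thesis unfolding B_def using s0 by (simp add: le_divide_eq mult.commute)
  qed
  have nn: "0 \<le> X \<omega> ^ (2 * p)" for \<omega> by (simp add: power_mult)
  show intX: "integrable M (\<lambda>\<omega>. X \<omega> ^ (2 * p))"
    by (rule Bochner_Integration.integrable_bound[OF intB]) (use Xm le nn order_trans[OF nn le] in auto)
  have "(\<integral>\<omega>. X \<omega> ^ (2 * p) \<partial>M) \<le> (\<integral>\<omega>. B \<omega> \<partial>M)"
    by (rule integral_mono[OF intX intB le])
  also have "(\<integral>\<omega>. B \<omega> \<partial>M) = fact (2 * p) * ((\<integral>\<omega>. exp (s * X \<omega>) \<partial>M) + (\<integral>\<omega>. exp ((- s) * X \<omega>) \<partial>M)) / s ^ (2 * p)"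
  proof -
    have i2: "integrable M (\<lambda>\<omega>. exp (- (s * X \<omega>)))" using ints[of "-s"] by simp
    show ?thesis unfolding B_def using ints[of s] i2 by (simp add: Bochner_Integration.integral_add)
  qed
  also have "\<dots> \<le> fact (2 * p) * (exp (\<nu> * s\<^sup>2 / 2) + exp (\<nu> * (- s)\<^sup>2 / 2)) / s ^ (2 * p)"
    using mgf[of s] mgf[of "-s"] s0 by (intro divide_right_mono mult_left_mono add_mono) auto
  also have "\<dots> = 2 * fact (2 * p) * exp (real p) / (2 * real p / \<nu>) ^ p"
  proof -
    have e: "\<nu> * s\<^sup>2 / 2 = real p" using s2 \<nu> by simp
    have e2: "\<nu> * (- s)\<^sup>2 / 2 = real p" using e by simp
    have sp: "s ^ (2 * p) = (2 * real p / \<nu>) ^ p" by (simp add: power_mult s2)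
    show ?thesis unfolding e e2 sp by simp
  qed
  also have "\<dots> \<le> 2 * (2 * real p) ^ (2 * p) * exp (real p) / (2 * real p / \<nu>) ^ p"
  proof -
    have "fact (2 * p) \<le> (real ((2 * p) ^ (2 * p)))" by (rule fact_le_power)
    also have "real ((2 * p) ^ (2 * p)) = (2 * real p) ^ (2 * p)" by simp
    finally have f: "fact (2 * p) \<le> (2 * real p) ^ (2 * p)" .
    have "0 \<le> (2 * real p / \<nu>) ^ p" using p \<nu> by simp
    moreover have "0 \<le> exp (real p)" by simp
    ultimately show ?thesis using f by (intro divide_right_mono mult_right_mono mult_left_mono) auto
  qed
  also have "\<dots> = 2 * (2 * exp 1 * real p * \<nu>) ^ p"
  proof -
    have "exp (real p) = (exp 1) ^ p" using exp_of_nat_mult[of p 1] by simp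
    moreover have "(2 * real p) ^ (2 * p) = ((2 * real p) ^ p) * ((2 * real p) ^ p)"
      by (simp only: mult_2 power_add)
    moreover have "(2 * real p / \<nu>) ^ p = (2 * real p) ^ p / \<nu> ^ p" by (rule power_divide)
    moreover have "(2 * exp 1 * real p * \<nu>) ^ p = (2 * real p) ^ p * exp 1 ^ p * \<nu> ^ p"
      by (simp add: power_mult_distrib mult_ac)
    moreover have "(2 * real p) ^ p > 0" "\<nu> ^ p > 0" using p \<nu> by auto
    ultimately show ?thesis using aux_alg p by simp
  qed
  finally show "(\<integral>\<omega>. X \<omega> ^ (2 * p) \<partial>M) \<le> 2 * (2 * exp 1 * real p * \<nu>) ^ p" .
qed

lemma subg_tail:
  assumes M: "prob_space M" and sg: "subgaussian M X \<nu>" and \<nu>: "0 < \<nu>" and p: "0 < p"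
  shows "measure M {\<omega> \<in> space M. 2 * exp 2 * real p * \<nu> \<le> (X \<omega>)\<^sup>2} \<le> 2 * exp (- real p)"
proof -
  interpret prob_space M by (rule M)
  define K where "K = 2 * exp 2 * real p * \<nu>"
  have K0: "0 < K" unfolding K_def using p \<nu> by simp
  have Xm: "X \<in> borel_measurable M" using sg unfolding subgaussian_def by auto
  note mom = subg_moment[OF M sg \<nu> p]
  have eq: "{\<omega> \<in> space M. K \<le> (X \<omega>)\<^sup>2} = {\<omega> \<in> space M. K ^ p \<le> X \<omega> ^ (2 * p)}"
  proof -
    have "K \<le> y\<^sup>2 \<longleftrightarrow> K ^ p \<le> (y\<^sup>2) ^ p" for y :: real
    proof
      assume "K \<le> y\<^sup>2" then show "K ^ p \<le> (y\<^sup>2) ^ p" using K0 by (intro power_mono) auto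
    next
      assume a: "K ^ p \<le> (y\<^sup>2) ^ p"
      obtain q where q: "p = Suc q" using p gr0_implies_Suc by blast
      show "K \<le> y\<^sup>2" using a unfolding q by (rule power_le_imp_le_base) simp
    qed
    then show ?thesis by (simp add: power_mult)
  qed
  have "measure M {\<omega> \<in> space M. K ^ p \<le> X \<omega> ^ (2 * p)} \<le> (\<integral>\<omega>. X \<omega> ^ (2 * p) \<partial>M) / K ^ p"
    by (rule integral_Markov_inequality_measure[OF mom(1), where A = "space M"])
       (use K0 in \<open>auto simp: power_mult\<close>)
  also have "\<dots> \<le> 2 * (2 * exp 1 * real p * \<nu>) ^ p / K ^ p"
    using mom(2) K0 by (intro divide_right_mono) auto
  also have "\<dots> = 2 * ((2 * exp 1 * real p * \<nu>) / K) ^ p" by (simp add: power_divide)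
  also have "(2 * exp 1 * real p * \<nu>) / K = exp (- 1)"
    unfolding K_def using p \<nu> by (simp add: exp_minus field_simps power2_eq_square exp_add[symmetric])
  also have "2 * exp (- 1) ^ p = 2 * exp (- real p)" using exp_of_nat_mult[of p "-1::real"] by simp
  finally show ?thesis using eq unfolding K_def by simp
qed

lemma convex_pow_nonneg: "convex_on {0::real..} (\<lambda>x. x ^ p)"
proof (cases "even p")
  case True
  then show ?thesis by (rule convex_on_subset[OF convex_power_even]) auto
next
  case False
  then show ?thesis by (rule convex_power_odd)
qed

lemma power_sum_le:
  fixes a :: "nat \<Rightarrow> real"
  assumes "0 < m" "\<And>t. t < m \<Longrightarrow> 0 \<le> a t"
  shows "(\<Sum>t<m. a t) ^ p \<le> real m ^ (p - 1) * (\<Sum>t<m. a t ^ p)"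
proof (cases "p = 0")
  case True then show ?thesis using assms by simp
next
  case False
  have "(\<Sum>t<m. (1 / real m) *\<^sub>R (real m * a t)) ^ p \<le> (\<Sum>t<m. (1 / real m) * (real m * a t) ^ p)"
    by (rule convex_on_sum[OF _ _ convex_pow_nonneg]) (use assms in auto)
  moreover have "(\<Sum>t<m. (1 / real m) *\<^sub>R (real m * a t)) = (\<Sum>t<m. a t)" using assms by simp
  moreover have "(\<Sum>t<m. (1 / real m) * (real m * a t) ^ p) = real m ^ (p - 1) * (\<Sum>t<m. a t ^ p)"
  proof -
    have "(1 / real m) * (real m * a t) ^ p = real m ^ (p - 1) * a t ^ p" for t
    proof -
      have "real m ^ p = real m * real m ^ (p - 1)" using False by (metis power_eq_if)
      then show ?thesis using assms by (simp add: power_mult_distrib)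
    qed
    then show ?thesis by (simp add: sum_distrib_left)
  qed
  ultimately show ?thesis by simp
qed

lemma norm_tail:
  assumes M: "prob_space M" and T: "0 < T" and sg: "\<And>t. t < T \<Longrightarrow> subgaussian M (X t) \<nu>"
    and \<nu>: "0 < \<nu>" and p: "0 < p"
  shows "measure M {\<omega> \<in> space M. 2 * exp 2 * real p * real T * \<nu> \<le> (\<Sum>t<T. (X t \<omega>)\<^sup>2)} \<le> 2 * exp (- real p)"
proof -
  interpret prob_space M by (rule M)
  define K where "K = 2 * exp 2 * real p * real T * \<nu>"
  have K0: "0 < K" unfolding K_def using p \<nu> T by simp
  have Xm: "\<And>t. t < T \<Longrightarrow> X t \<in> borel_measurable M" using sg unfolding subgaussian_def by auto
  define S where "S \<omega> = (\<Sum>t<T. (X t \<omega>)\<^sup>2)" for \<omega>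
  have S0: "0 \<le> S \<omega>" for \<omega> unfolding S_def by (simp add: sum_nonneg)
  have Sm: "S \<in> borel_measurable M" unfolding S_def using Xm by (intro borel_measurable_sum) auto
  define B where "B \<omega> = real T ^ (p - 1) * (\<Sum>t<T. X t \<omega> ^ (2 * p))" for \<omega>
  have intB: "integrable M B" unfolding B_def
  proof -
    have "integrable M (\<lambda>x. \<Sum>t<T. X t x ^ (2 * p))"
      by (rule Bochner_Integration.integrable_sum) (use subg_moment(1)[OF M sg \<nu> p] in auto)
    then show "integrable M (\<lambda>\<omega>. real T ^ (p - 1) * (\<Sum>t<T. X t \<omega> ^ (2 * p)))" by simp
  qed
  have le: "S \<omega> ^ p \<le> B \<omega>" for \<omega>
  proof -
    have "S \<omega> ^ p \<le> real T ^ (p - 1) * (\<Sum>t<T. ((X t \<omega>)\<^sup>2) ^ p)"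
      unfolding S_def by (rule power_sum_le) (use T in auto)
    then show ?thesis unfolding B_def by (simp add: power_mult)
  qed
  have intS: "integrable M (\<lambda>\<omega>. S \<omega> ^ p)"
    by (rule Bochner_Integration.integrable_bound[OF intB]) (use Sm le S0 order_trans[OF _ le] in auto)
  have "(\<integral>\<omega>. S \<omega> ^ p \<partial>M) \<le> (\<integral>\<omega>. B \<omega> \<partial>M)" by (rule integral_mono[OF intS intB le])
  also have "(\<integral>\<omega>. B \<omega> \<partial>M) = real T ^ (p - 1) * (\<Sum>t<T. (\<integral>\<omega>. X t \<omega> ^ (2 * p) \<partial>M))"
    unfolding B_def using subg_moment(1)[OF M sg \<nu> p] by (simp add: Bochner_Integration.integral_sum)
  also have "\<dots> \<le> real T ^ (p - 1) * (\<Sum>t<T. 2 * (2 * exp 1 * real p * \<nu>) ^ p)"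
    by (intro mult_left_mono sum_mono subg_moment(2)[OF M sg \<nu> p]) auto
  also have "\<dots> = 2 * (2 * exp 1 * real p * \<nu> * real T) ^ p"
  proof -
    have "real T ^ (p - 1) * real T = real T ^ p" using p by (metis power_minus_mult)
    then show ?thesis by (simp add: power_mult_distrib mult_ac)
  qed
  finally have ES: "(\<integral>\<omega>. S \<omega> ^ p \<partial>M) \<le> 2 * (2 * exp 1 * real p * \<nu> * real T) ^ p" .
  have eq: "{\<omega> \<in> space M. K \<le> S \<omega>} = {\<omega> \<in> space M. K ^ p \<le> S \<omega> ^ p}"
  proof -
    have "K \<le> y \<longleftrightarrow> K ^ p \<le> y ^ p" if "0 \<le> y" for y :: real
    proof
      assume "K \<le> y" then show "K ^ p \<le> y ^ p" using K0 by (intro power_mono) auto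
    next
      assume a: "K ^ p \<le> y ^ p"
      obtain q where q: "p = Suc q" using p gr0_implies_Suc by blast
      show "K \<le> y" using a that unfolding q by (rule power_le_imp_le_base)
    qed
    then show ?thesis using S0 by auto
  qed
  have "measure M {\<omega> \<in> space M. K ^ p \<le> S \<omega> ^ p} \<le> (\<integral>\<omega>. S \<omega> ^ p \<partial>M) / K ^ p"
    by (rule integral_Markov_inequality_measure[OF intS, where A = "space M"]) (use K0 S0 in auto)
  also have "\<dots> \<le> 2 * (2 * exp 1 * real p * \<nu> * real T) ^ p / K ^ p"
    using ES K0 by (intro divide_right_mono) auto
  also have "\<dots> = 2 * ((2 * exp 1 * real p * \<nu> * real T) / K) ^ p" by (simp add: power_divide)
  also have "(2 * exp 1 * real p * \<nu> * real T) / K = exp (- 1)"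
    unfolding K_def using p \<nu> T by (simp add: exp_minus field_simps power2_eq_square exp_add[symmetric])
  also have "2 * exp (- 1) ^ p = 2 * exp (- real p)" using exp_of_nat_mult[of p "-1::real"] by simp
  finally show ?thesis using eq unfolding K_def S_def by simp
qed


lemma sum_delta_mult: "(\<Sum>n<(T::nat). f n * (if t = n then 1 else (0::real))) = (if t < T then f t else 0)"
proof -
  have "(\<Sum>n<T. f n * (if t = n then 1 else (0::real))) = (\<Sum>n\<in>{..<T}. if t = n then f t else 0)"
    by (intro sum.cong) auto
  also have "\<dots> = (if t < T then f t else 0)" by (subst sum.delta') auto
  finally show ?thesis .
qed

lemma cen_norm_le: assumes "0 < T" shows "ip T (cen T z) (cen T z) \<le> ip T z z"
proof -
  have "ip T (cen T z) (cen T z) = ip T z (cen T z)" by (rule ip_cen_cen)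
  also have "\<dots> = (\<Sum>s<T. z s * z s) - (\<Sum>s<T. z s) * (\<Sum>t<T. z t) / real T"
    unfolding ip_def cen_def centering_def
    by (simp add: algebra_simps sum_subtractf sum_distrib_left sum_distrib_right sum_divide_distrib
        if_distrib[of "\<lambda>x. x * _"] cong: if_cong)
      (simp add: mult.assoc[symmetric] sum_delta_mult)
  also have "\<dots> \<le> (\<Sum>s<T. z s * z s)"
    using assms by (simp add: power2_eq_square[symmetric])
  finally show ?thesis unfolding ip_def .
qed

lemma cen_lincomb: "cen T (\<lambda>t. \<Sum>l\<in>L. f l t * c l) s = (\<Sum>l\<in>L. cen T (f l) s * c l)"
  unfolding cen_def by (simp add: sum_distrib_left sum_distrib_right mult_ac) (rule sum.swap)

lemma cen_div: "cen T (\<lambda>t. x t / c) s = cen T x s / c"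
  unfolding cen_def by (simp add: sum_divide_distrib)

lemma cen_nv: assumes "s < T" shows "cen T (nv T (cen T z)) s = nv T (cen T z) s"
  unfolding nv_def cen_div using cen_cen[OF assms] by simp

lemma cen_ww: assumes "s < T" shows "cen T (ww T n (\<lambda>i. cen T (Z i)) U lam a) s = ww T n (\<lambda>i. cen T (Z i)) U lam a s"
  unfolding ww_def cen_lincomb using cen_nv[OF assms] by simp

lemma parseval:
  fixes U :: "nat \<Rightarrow> nat \<Rightarrow> real"
  assumes orth: "\<And>a b. a < d \<Longrightarrow> b < d \<Longrightarrow> (\<Sum>i<n. U i a * U i b) = (if a = b then 1 else 0)"
  shows "(\<Sum>j<n. (\<Sum>a<d. c a * U j a)\<^sup>2) = (\<Sum>a<d. (c a)\<^sup>2)"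
proof -
  have "(\<Sum>j<n. (\<Sum>a<d. c a * U j a)\<^sup>2) = (\<Sum>j<n. \<Sum>a<d. \<Sum>b<d. c a * c b * (U j a * U j b))"
    by (simp add: power2_eq_square sum_distrib_left sum_distrib_right mult_ac)
  also have "\<dots> = (\<Sum>a<d. \<Sum>b<d. c a * c b * (\<Sum>j<n. U j a * U j b))"
    by (subst sum.swap) (simp add: sum_distrib_left sum.swap[of _ "{..<n}" "{..<d}"])
  also have "\<dots> = (\<Sum>a<d. \<Sum>b<d. c a * c b * (if a = b then 1 else 0))"
    by (intro sum.cong refl) (simp add: orth)
  also have "\<dots> = (\<Sum>a<d. (c a)\<^sup>2)"
    by (simp add: power2_eq_square if_distrib[of "\<lambda>x. _ * x"] cong: if_cong)
  finally show ?thesis .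
qed


lemma meas_sqrt: "f \<in> borel_measurable M \<Longrightarrow> (\<lambda>x. sqrt (f x)) \<in> borel_measurable M"
  using measurable_compose[OF _ borel_measurable_sqrt] by blast

lemma corr_meas:
  assumes Zm: "\<And>i t. i \<in> I \<Longrightarrow> t < T \<Longrightarrow> (\<lambda>\<omega>. Z \<omega> i t) \<in> borel_measurable M"
    and i: "i \<in> I" and j: "j \<in> I"
  shows "(\<lambda>\<omega>. corr T (Z \<omega>) i j) \<in> borel_measurable M"
proof -
  have s: "(\<lambda>\<omega>. sig2 T (Z \<omega>) k) \<in> borel_measurable M" if k: "k \<in> I" for k
    unfolding sig2_def
    by (intro borel_measurable_times borel_measurable_const borel_measurable_sum borel_measurable_power
        Zm k) simp
  show ?thesis unfolding corr_def
    by (intro borel_measurable_divide borel_measurable_times borel_measurable_const borel_measurable_sum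
        meas_sqrt s i j Zm) auto
qed

lemma norm_2inf_meas:
  assumes "\<And>i j. i < n \<Longrightarrow> j < m \<Longrightarrow> (\<lambda>\<omega>. B \<omega> i j) \<in> borel_measurable M"
  shows "(\<lambda>\<omega>. norm_2inf n m (B \<omega>)) \<in> borel_measurable M"
proof -
  define h where "h j \<omega> = (if j < n then sqrt (\<Sum>a<m. (B \<omega> j a)\<^sup>2) else 0)" for j \<omega>
  have eq: "norm_2inf n m (B \<omega>) = Max ((\<lambda>j. h j \<omega>) ` {..n})" for \<omega>
  proof -
    have "insert 0 ((\<lambda>i. sqrt (\<Sum>j<m. (B \<omega> i j)\<^sup>2)) ` {..<n}) = (\<lambda>j. h j \<omega>) ` {..n}"
    proof
      show "insert 0 ((\<lambda>i. sqrt (\<Sum>j<m. (B \<omega> i j)\<^sup>2)) ` {..<n}) \<subseteq> (\<lambda>j. h j \<omega>) ` {..n}"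
      proof
        fix y assume "y \<in> insert 0 ((\<lambda>i. sqrt (\<Sum>j<m. (B \<omega> i j)\<^sup>2)) ` {..<n})"
        then consider "y = 0" | i where "i < n" "y = sqrt (\<Sum>j<m. (B \<omega> i j)\<^sup>2)" by auto
        then show "y \<in> (\<lambda>j. h j \<omega>) ` {..n}"
        proof cases
          case 1 then show ?thesis unfolding h_def by (intro image_eqI[of _ _ n]) auto
        next
          case 2 then show ?thesis unfolding h_def by (intro image_eqI[of _ _ i]) auto
        qed
      qed
      show "(\<lambda>j. h j \<omega>) ` {..n} \<subseteq> insert 0 ((\<lambda>i. sqrt (\<Sum>j<m. (B \<omega> i j)\<^sup>2)) ` {..<n})"
        unfolding h_def by auto
    qed
    then show ?thesis unfolding norm_2inf_def by simp
  qed
  have "(\<lambda>\<omega>. Max ((\<lambda>j. h j \<omega>) ` {..n})) \<in> borel_measurable M"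
  proof (rule borel_measurable_Max)
    fix j assume "j \<in> {..n}"
    show "h j \<in> borel_measurable M"
    proof (cases "j < n")
      case True
      then have "h j = (\<lambda>\<omega>. sqrt (\<Sum>a<m. (B \<omega> j a)\<^sup>2))" unfolding h_def by auto
      also have "\<dots> \<in> borel_measurable M"
        by (intro meas_sqrt borel_measurable_sum borel_measurable_power assms True) simp
      finally show ?thesis .
    next
      case False
      then have "h j = (\<lambda>\<omega>. 0)" unfolding h_def by auto
      then show ?thesis by simp
    qed
  qed simp
  then show ?thesis unfolding eq .
qed

lemma norm_2inf_le:
  assumes "0 \<le> c" "\<And>i. i < n \<Longrightarrow> L2_set (B i) {..<m} \<le> c"
  shows "norm_2inf n m B \<le> c"
  unfolding norm_2inf_def using assms by (auto simp: L2_set_def)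

lemma norm_2inf_ge:
  assumes "i < n" shows "L2_set (B i) {..<m} \<le> norm_2inf n m B"
  unfolding norm_2inf_def L2_set_def using assms by (intro Max_ge) auto

lemma norm_2inf_nonneg: "0 \<le> norm_2inf n m B"
  unfolding norm_2inf_def by (intro Max_ge order_trans[OF _ Max_ge]) auto


lemma abs_le_from_sq:
  fixes X b :: real
  assumes "X\<^sup>2 \<le> b\<^sup>2" "0 \<le> b" shows "\<bar>X\<bar> \<le> b"
  using power2_le_imp_le[of "\<bar>X\<bar>" b] assms by simp

lemma coord_subg:
  assumes "subgaussian_row M T (\<lambda>\<omega> t. N \<omega> t) \<nu>" "t < T"
  shows "subgaussian M (\<lambda>\<omega>. N \<omega> t) \<nu>"
proof -
  define u where "u s = (if s = t then 1 else 0 :: real)" for s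
  have "(\<Sum>s<T. (u s)\<^sup>2) = 1" unfolding u_def using assms(2)
    by (simp add: if_distrib[of "\<lambda>x. x\<^sup>2"] cong: if_cong)
  then have "subgaussian M (\<lambda>\<omega>. \<Sum>s<T. u s * N \<omega> s) \<nu>"
    using assms(1) unfolding subgaussian_row_def by blast
  moreover have "(\<Sum>s<T. u s * N \<omega> s) = N \<omega> t" for \<omega>
    unfolding u_def using assms(2) by (simp add: if_distrib[of "\<lambda>x. x * _"] cong: if_cong)
  ultimately show ?thesis by simp
qed

lemma set_ge_meas: "(f :: _ \<Rightarrow> real) \<in> borel_measurable M \<Longrightarrow> {x \<in> space M. c \<le> f x} \<in> sets M"
  by measurable

lemma set_le_meas: "(f :: _ \<Rightarrow> real) \<in> borel_measurable M \<Longrightarrow> {x \<in> space M. f x \<le> c} \<in> sets M"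
  by measurable

lemma one_k:
  fixes T n d :: nat and Zs :: "nat \<Rightarrow> nat \<Rightarrow> real" and M :: "'a measure"
    and N :: "'a \<Rightarrow> nat \<Rightarrow> nat \<Rightarrow> real" and \<nu> lam :: "nat \<Rightarrow> real" and U :: "nat \<Rightarrow> nat \<Rightarrow> real"
    and cl :: real
  defines "\<gamma> \<equiv> Min ((\<lambda>i. sig2 T Zs i / \<nu> i) ` {..<n})"
  assumes sig_pos: "\<And>i. i < n \<Longrightarrow> sig2 T Zs i > 0"
    and lam_sorted: "\<And>a b. a \<le> b \<Longrightarrow> b < d \<Longrightarrow> lam b \<le> lam a"
    and lam_pos: "\<And>a. a < d \<Longrightarrow> lam a > 0"
    and U_orth: "\<And>a b. a < d \<Longrightarrow> b < d \<Longrightarrow> (\<Sum>i<n. U i a * U i b) = (if a = b then 1 else 0)"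
    and R_eig: "\<And>i j. i < n \<Longrightarrow> j < n \<Longrightarrow> corr T Zs i j = (\<Sum>a<d. U i a * lam a * U j a)"
    and prob: "prob_space M"
    and nu_pos: "\<And>i. i < n \<Longrightarrow> \<nu> i > 0"
    and subg: "\<And>i. i < n \<Longrightarrow> subgaussian_row M T (\<lambda>\<omega> t. N \<omega> i t) (\<nu> i)"
    and n2: "2 \<le> n" and T2: "2 \<le> T" and cl: "0 < cl" "cl \<le> lam (d - 1)"
    and lnnT: "ln (real n) \<le> 2 * ln (real T)" and gam: "ln (real T) / \<gamma> \<le> 1 / 20000"
  shows "1 - 2 * (2 + 1 / cl) / real n \<le> measure M {\<omega> \<in> space M.
        norm_2inf n d (mat_mul n (\<lambda>i j. corr T (\<lambda>i t. Zs i t + N \<omega> i t) i j - corr T Zs i j) (\<lambda>i a. U i a / sqrt (lam a)))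
        \<le> 3640 * sqrt (real d * ln (real T) / (\<gamma> * lam (d - 1)))
            * (1 + (sqrt (ln (real n) / \<gamma>) + sqrt (1 / real T)) * norm_2inf n n (corr T Zs))}"
proof -
  interpret prob_space M by (rule prob)
  have T0: "0 < T" using T2 by simp
  have n0: "0 < n" using n2 by simp
  define x where "x i = cen T (Zs i)" for i
  define e where "e \<omega> i = cen T (\<lambda>t. N \<omega> i t)" for \<omega> i
  define v where "v i = nv T (x i)" for i
  define Rs where "Rs = corr T Zs"
  have Rs_eq: "Rs i j = ip T (v i) (v j)" for i j
    unfolding Rs_def v_def x_def using corr_eq[OF T0] by simp
  have Rn_eq: "corr T (\<lambda>i t. Zs i t + N \<omega> i t) i j
      = ip T (nv T (\<lambda>s. x i s + e \<omega> i s)) (nv T (\<lambda>s. x j s + e \<omega> j s))" for \<omega> i j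
    unfolding x_def e_def using corr_eq[OF T0, of "\<lambda>i t. Zs i t + N \<omega> i t"] by (simp add: cen_add)
  have sx2: "(nz T (x i))\<^sup>2 = real T * sig2 T Zs i" for i
    unfolding nz_sq x_def sig2_eq using T0 by simp
  have spos: "nz T (x i) > 0" if "i < n" for i
  proof -
    have "(nz T (x i))\<^sup>2 > 0" unfolding sx2 using sig_pos[OF that] T0 by simp
    then show ?thesis using nz_nonneg[of T "x i"] by (metis less_eq_real_def power_zero_numeral zero_less_power2)
  qed
  have Rii: "Rs i i = 1" if "i < n" for i unfolding Rs_eq v_def by (rule nv_ip_self[OF spos[OF that]])
  have d0: "0 < d"
  proof (rule ccontr)
    assume "\<not> 0 < d" then have "d = 0" by simp
    then have "Rs 0 0 = 0" using R_eig[OF n0 n0] unfolding Rs_def by simp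
    then show False using Rii[OF n0] by simp
  qed
  have R_eig': "ip T (nv T (x i)) (nv T (x j)) = (\<Sum>a<d. U i a * lam a * U j a)" if "i < n" "j < n" for i j
    using R_eig[OF that] Rs_eq[of i j] unfolding Rs_def v_def by simp
  interpret D0: det T n d x "\<lambda>_ _. 0" U lam 0 0
    by unfold_locales (use spos lam_pos lam_sorted U_orth R_eig' d0 in \<open>auto simp: ip_def\<close>)
  have w_unit: "ip T (ww T n x U lam a) (ww T n x U lam a) = 1" if a: "a < d" for a
  proof -
    have "ip T (ww T n x U lam a) (ww T n x U lam a) = (\<Sum>l<n. (U l a / sqrt (lam a)) * ip T (nv T (x l)) (ww T n x U lam a))"
      unfolding ww_def[of T n x U lam a] by (rule ip_lincomb)
    also have "\<dots> = (\<Sum>l<n. (U l a / sqrt (lam a)) * (U l a * sqrt (lam a)))"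
      by (intro sum.cong refl) (simp add: ip_sym[of T "nv T (x _)"] D0.w_v a)
    also have "\<dots> = (\<Sum>l<n. U l a * U l a)"
      using lam_pos[OF a] by (intro sum.cong refl) simp
    also have "\<dots> = 1" using U_orth[OF a a] by simp
    finally show ?thesis .
  qed
  have trace: "(\<Sum>a<d. lam a) = real n"
  proof -
    have "real n = (\<Sum>i<n. Rs i i)" using Rii by simp
    also have "\<dots> = (\<Sum>i<n. \<Sum>a<d. lam a * (U i a * U i a))"
      unfolding Rs_def by (intro sum.cong refl) (simp add: R_eig mult_ac)
    also have "\<dots> = (\<Sum>a<d. lam a * (\<Sum>i<n. U i a * U i a))"
      by (subst sum.swap) (simp add: sum_distrib_left)
    also have "\<dots> = (\<Sum>a<d. lam a)" using U_orth by simp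
    finally show ?thesis by simp
  qed
  have dlam: "real d * lam (d - 1) \<le> real n"
  proof -
    have "(\<Sum>a<d. lam (d - 1)) \<le> (\<Sum>a<d. lam a)" by (intro sum_mono lam_sorted) auto
    then show ?thesis using trace by simp
  qed
  have dcl: "real d * cl \<le> real n"
    using dlam cl mult_left_mono[OF cl(2), of "real d"] by linarith
  define \<rho> where "\<rho> = norm_2inf n n Rs"
  define \<rho>i where "\<rho>i i = L2_set (Rs i) {..<n}" for i
  have rho0: "0 \<le> \<rho>" unfolding \<rho>_def by (rule norm_2inf_nonneg)
  have rhoi_le: "\<rho>i i \<le> \<rho>" if "i < n" for i unfolding \<rho>i_def \<rho>_def by (rule norm_2inf_ge[OF that])
  have rhoi0: "0 \<le> \<rho>i i" for i unfolding \<rho>i_def by simp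
  have nrho: "real n \<le> real d * \<rho>\<^sup>2"
  proof -
    have row: "1 \<le> (\<Sum>a<d. (U i a)\<^sup>2) * \<rho>\<^sup>2" if i: "i < n" for i
    proof -
      define c where "c a = U i a * lam a" for a
      have ri2: "(\<rho>i i)\<^sup>2 = (\<Sum>a<d. (c a)\<^sup>2)"
      proof -
        have "(\<rho>i i)\<^sup>2 = (\<Sum>j<n. (Rs i j)\<^sup>2)" unfolding \<rho>i_def L2_set_def by (simp add: sum_nonneg)
        also have "\<dots> = (\<Sum>j<n. (\<Sum>a<d. c a * U j a)\<^sup>2)"
          unfolding Rs_def c_def by (intro sum.cong refl) (simp add: R_eig i)
        also have "\<dots> = (\<Sum>a<d. (c a)\<^sup>2)" by (rule parseval[OF U_orth])
        finally show ?thesis .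
      qed
      have "1 = (\<Sum>a<d. U i a * c a)" using Rii[OF i] unfolding Rs_def c_def by (simp add: R_eig i mult_ac)
      also have "\<dots> \<le> (\<Sum>a<d. \<bar>U i a\<bar> * \<bar>c a\<bar>)" by (rule sum_mono) (simp add: abs_mult[symmetric])
      also have "\<dots> \<le> L2_set (U i) {..<d} * L2_set c {..<d}" by (rule L2_set_mult_ineq)
      finally have "1\<^sup>2 \<le> (L2_set (U i) {..<d} * L2_set c {..<d})\<^sup>2" by (intro power_mono) auto
      also have "\<dots> = (\<Sum>a<d. (U i a)\<^sup>2) * (\<rho>i i)\<^sup>2"
        unfolding ri2 L2_set_def by (simp add: power_mult_distrib sum_nonneg)
      also have "\<dots> \<le> (\<Sum>a<d. (U i a)\<^sup>2) * \<rho>\<^sup>2"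
        by (intro mult_left_mono power_mono rhoi_le i rhoi0) (simp add: sum_nonneg)
      finally show ?thesis by simp
    qed
    have "real n = (\<Sum>i<n. 1)" by simp
    also have "\<dots> \<le> (\<Sum>i<n. (\<Sum>a<d. (U i a)\<^sup>2) * \<rho>\<^sup>2)" by (intro sum_mono row) auto
    also have "\<dots> = (\<Sum>a<d. \<Sum>i<n. U i a * U i a) * \<rho>\<^sup>2"
      by (simp add: sum_distrib_right power2_eq_square) (rule sum.swap)
    also have "\<dots> = real d * \<rho>\<^sup>2" using U_orth by simp
    finally show ?thesis .
  qed
  have gam_le: "\<gamma> \<le> sig2 T Zs i / \<nu> i" if "i < n" for i
    unfolding \<gamma>_def using that by (intro Min_le) auto
  have gam0: "0 < \<gamma>"
    unfolding \<gamma>_def using n0 sig_pos nu_pos by (subst Min_gr_iff) auto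
  have nu_gam: "\<nu> i * \<gamma> \<le> sig2 T Zs i" if "i < n" for i
    using gam_le[OF that] nu_pos[OF that] by (simp add: field_simps)
  have lnn: "1 / 2 \<le> ln (real n)"
  proof -
    have "ln 2 \<le> ln (real n)" using n2 by simp
    then show ?thesis using ln2_ge_two_thirds by linarith
  qed
  define p where "p = nat \<lceil>3 * ln (real n)\<rceil>"
  have p_ge: "3 * ln (real n) \<le> real p" unfolding p_def by linarith
  have p_le: "real p \<le> 5 * ln (real n)" unfolding p_def using lnn by linarith
  have p0: "0 < p" using p_ge lnn by simp
  define K where "K = 2 * exp 2 * real p"
  have K0: "0 \<le> K" unfolding K_def by simp
  have K90: "K \<le> 90 * ln (real n)"
  proof -
    have e2: "exp (2::real) \<le> 9"
    proof -
      have "exp (2::real) = exp 1 * exp 1" by (simp add: exp_add[symmetric])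
      also have "\<dots> \<le> 3 * 3" using exp_le by (intro mult_mono) auto
      finally show ?thesis by simp
    qed
    have "K \<le> 2 * 9 * real p" unfolding K_def using mult_right_mono[OF e2, of "real p"] by (simp add: mult.commute)
    also have "\<dots> \<le> 2 * 9 * (5 * ln (real n))" using p_le by simp
    finally show ?thesis by simp
  qed
  define \<eta> where "\<eta> = K / \<gamma>"
  define \<theta> where "\<theta> = sqrt (K / (\<gamma> * real T))"
  have lnT0: "0 \<le> ln (real T)" using T2 by simp
  have eta_small: "\<eta> \<le> 9 / 1000"
  proof -
    have "\<eta> \<le> 90 * ln (real n) / \<gamma>" unfolding \<eta>_def using K90 gam0 by (simp add: divide_right_mono)
    also have "\<dots> \<le> 180 * (ln (real T) / \<gamma>)" using lnnT gam0 by (simp add: divide_right_mono)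
    also have "\<dots> \<le> 180 * (1 / 20000)" using gam by simp
    finally show ?thesis by simp
  qed
  have eta0: "0 \<le> \<eta>" unfolding \<eta>_def using K0 gam0 by simp
  have th0: "0 \<le> \<theta>" unfolding \<theta>_def using K0 gam0 by simp
  have th_small: "\<theta> \<le> 1 / 10"
    unfolding \<theta>_def
  proof (rule real_le_lsqrt)
    have "K / (\<gamma> * real T) \<le> K / \<gamma>" using K0 gam0 T2
      by (intro divide_left_mono) auto
    moreover have "K / \<gamma> \<le> 9 / 1000" using eta_small unfolding \<eta>_def .
    ultimately have "K / (\<gamma> * real T) \<le> 9 / 1000" by linarith
    moreover have "(9::real) / 1000 \<le> (1 / 10)\<^sup>2" by (simp add: power2_eq_square)
    ultimately show "K / (\<gamma> * real T) \<le> (1 / 10)\<^sup>2" by linarith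
  qed simp
  have small: "2 * \<theta> + \<eta> \<le> 1 / 2" using th_small eta_small by simp
  have sgc: "subgaussian M (\<lambda>\<omega>. N \<omega> i t) (\<nu> i)" if "i < n" "t < T" for i t
    by (rule coord_subg[OF subg[OF that(1)] that(2)])
  have Nm: "(\<lambda>\<omega>. N \<omega> i t) \<in> borel_measurable M" if "i < n" "t < T" for i t
    using sgc[OF that] unfolding subgaussian_def by simp
  have sgu: "subgaussian M (\<lambda>\<omega>. \<Sum>t<T. u t * N \<omega> i t) (\<nu> i)" if "i < n" "ip T u u = 1" for i u
    using subg[OF that(1)] that(2) unfolding subgaussian_row_def ip_def by (simp add: power2_eq_square)
  have vunit: "ip T (v j) (v j) = 1" if "j < n" for j unfolding v_def by (rule D0.v_unit[OF that])
  define B1 where "B1 i = {\<omega> \<in> space M. 2 * exp 2 * real p * real T * \<nu> i \<le> (\<Sum>t<T. (N \<omega> i t)\<^sup>2)}" for i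
  define B2 where "B2 ij = {\<omega> \<in> space M. 2 * exp 2 * real p * \<nu> (fst ij) \<le> (\<Sum>t<T. v (snd ij) t * N \<omega> (fst ij) t)\<^sup>2}" for ij
  define B3 where "B3 ia = {\<omega> \<in> space M. 2 * exp 2 * real p * \<nu> (fst ia) \<le> (\<Sum>t<T. ww T n x U lam (snd ia) t * N \<omega> (fst ia) t)\<^sup>2}" for ia
  define Bad where "Bad = (\<Union>i\<in>{..<n}. B1 i) \<union> (\<Union>ij\<in>{..<n} \<times> {..<n}. B2 ij) \<union> (\<Union>ia\<in>{..<n} \<times> {..<d}. B3 ia)"
  have B1m: "B1 i \<in> sets M" if "i < n" for i unfolding B1_def
    by (intro set_ge_meas borel_measurable_sum borel_measurable_power Nm that) simp
  have B2m: "B2 ij \<in> sets M" if "ij \<in> {..<n} \<times> {..<n}" for ij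
    using sgu[of "fst ij" "v (snd ij)"] that vunit unfolding B2_def subgaussian_def
    by (intro set_ge_meas borel_measurable_power) auto
  have B3m: "B3 ia \<in> sets M" if "ia \<in> {..<n} \<times> {..<d}" for ia
    using sgu[of "fst ia" "ww T n x U lam (snd ia)"] that w_unit unfolding B3_def subgaussian_def
    by (intro set_ge_meas borel_measurable_power) auto
  have B1p: "measure M (B1 i) \<le> 2 * exp (- real p)" if "i < n" for i
    unfolding B1_def by (rule norm_tail[OF prob T0 sgc[OF that] nu_pos[OF that] p0])
  have B2p: "measure M (B2 ij) \<le> 2 * exp (- real p)" if "ij \<in> {..<n} \<times> {..<n}" for ij
    unfolding B2_def using that vunit by (intro subg_tail[OF prob sgu _ p0] nu_pos) auto
  have B3p: "measure M (B3 ia) \<le> 2 * exp (- real p)" if "ia \<in> {..<n} \<times> {..<d}" for ia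
    unfolding B3_def using that w_unit by (intro subg_tail[OF prob sgu _ p0] nu_pos) auto
  have U1m: "(\<Union>i\<in>{..<n}. B1 i) \<in> sets M" using B1m by auto
  have U2m: "(\<Union>ij\<in>{..<n} \<times> {..<n}. B2 ij) \<in> sets M" using B2m by (intro sets.finite_UN) auto
  have U3m: "(\<Union>ia\<in>{..<n} \<times> {..<d}. B3 ia) \<in> sets M" using B3m by (intro sets.finite_UN) auto
  have Badm: "Bad \<in> sets M" unfolding Bad_def using U1m U2m U3m by auto
  have U1p: "measure M (\<Union>i\<in>{..<n}. B1 i) \<le> real n * (2 * exp (- real p))"
  proof -
    have "measure M (\<Union>i\<in>{..<n}. B1 i) \<le> (\<Sum>i\<in>{..<n}. measure M (B1 i))"
      using B1m by (intro finite_measure_subadditive_finite) auto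
    also have "\<dots> \<le> real (card {..<n}) * (2 * exp (- real p))" by (rule sum_bounded_above) (use B1p in auto)
    finally show ?thesis by simp
  qed
  have U2p: "measure M (\<Union>ij\<in>{..<n} \<times> {..<n}. B2 ij) \<le> real n * real n * (2 * exp (- real p))"
  proof -
    have "measure M (\<Union>ij\<in>{..<n} \<times> {..<n}. B2 ij) \<le> (\<Sum>ij\<in>{..<n} \<times> {..<n}. measure M (B2 ij))"
      using B2m by (intro finite_measure_subadditive_finite) auto
    also have "\<dots> \<le> real (card ({..<n} \<times> {..<n})) * (2 * exp (- real p))" by (rule sum_bounded_above) (use B2p in auto)
    finally show ?thesis by (simp add: card_cartesian_product)
  qed
  have U3p: "measure M (\<Union>ia\<in>{..<n} \<times> {..<d}. B3 ia) \<le> real n * real d * (2 * exp (- real p))"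
  proof -
    have "measure M (\<Union>ia\<in>{..<n} \<times> {..<d}. B3 ia) \<le> (\<Sum>ia\<in>{..<n} \<times> {..<d}. measure M (B3 ia))"
      using B3m by (intro finite_measure_subadditive_finite) auto
    also have "\<dots> \<le> real (card ({..<n} \<times> {..<d})) * (2 * exp (- real p))" by (rule sum_bounded_above) (use B3p in auto)
    finally show ?thesis by (simp add: card_cartesian_product)
  qed
  have Badp: "measure M Bad \<le> 2 * exp (- real p) * (real n + real n * real n + real n * real d)"
  proof -
    have "measure M Bad \<le> measure M ((\<Union>i\<in>{..<n}. B1 i) \<union> (\<Union>ij\<in>{..<n} \<times> {..<n}. B2 ij))
        + measure M (\<Union>ia\<in>{..<n} \<times> {..<d}. B3 ia)"
      unfolding Bad_def using U1m U2m U3m by (intro measure_Un_le) auto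
    also have "\<dots> \<le> measure M (\<Union>i\<in>{..<n}. B1 i) + measure M (\<Union>ij\<in>{..<n} \<times> {..<n}. B2 ij)
        + measure M (\<Union>ia\<in>{..<n} \<times> {..<d}. B3 ia)"
      using U1m U2m measure_Un_le by auto
    finally show ?thesis using U1p U2p U3p by (simp add: algebra_simps)
  qed
  have fin_bound: "2 * exp (- real p) * (real n + real n * real n + real n * real d) \<le> 2 * (2 + 1 / cl) / real n"
  proof -
    have nr: "real n \<ge> 2" using n2 by simp
    have ep: "exp (- real p) \<le> 1 / real n ^ 3"
    proof -
      have "exp (- real p) \<le> exp (- (3 * ln (real n)))" using p_ge by simp
      also have "exp (3 * ln (real n)) = real n ^ 3"
        using exp_of_nat_mult[of 3 "ln (real n)"] nr by simp
      then have "exp (- (3 * ln (real n))) = 1 / real n ^ 3" by (simp add: exp_minus inverse_eq_divide)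
      finally show ?thesis .
    qed
    have dn: "real d \<le> real n / cl" using dcl cl by (simp add: field_simps)
    have "2 * exp (- real p) * (real n + real n * real n + real n * real d)
        \<le> 2 * (1 / real n ^ 3) * (real n + real n * real n + real n * (real n / cl))"
      using ep dn nr by (intro mult_mono mult_left_mono add_mono) auto
    also have "\<dots> = 2 * (1 / (real n)\<^sup>2 + 1 / real n + 1 / (cl * real n))"
      using nr cl by (simp add: field_simps power2_eq_square power3_eq_cube)
    also have "\<dots> \<le> 2 * (1 / real n + 1 / real n + 1 / (cl * real n))"
    proof -
      have "1 / (real n)\<^sup>2 \<le> 1 / real n" using nr by (simp add: power2_eq_square field_simps)
      then show ?thesis by simp
    qed
    also have "\<dots> = 2 * (2 + 1 / cl) / real n" using nr cl by (simp add: field_simps)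
    finally show ?thesis .
  qed
  define RHS where "RHS = 3640 * sqrt (real d * ln (real T) / (\<gamma> * lam (d - 1)))
            * (1 + (sqrt (ln (real n) / \<gamma>) + sqrt (1 / real T)) * norm_2inf n n (corr T Zs))"
  define F where "F \<omega> = mat_mul n (\<lambda>i j. corr T (\<lambda>i t. Zs i t + N \<omega> i t) i j - corr T Zs i j) (\<lambda>i a. U i a / sqrt (lam a))" for \<omega>
  define Tg where "Tg = {\<omega> \<in> space M. norm_2inf n d (F \<omega>) \<le> RHS}"
  have Tgm: "Tg \<in> sets M"
  proof -
    have cm: "(\<lambda>\<omega>. corr T (\<lambda>i t. Zs i t + N \<omega> i t) i l) \<in> borel_measurable M" if "i < n" "l < n" for i l
      by (rule corr_meas[where I = "{..<n}"]) (use that Nm in auto)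
    have "(\<lambda>\<omega>. norm_2inf n d (F \<omega>)) \<in> borel_measurable M"
      unfolding F_def mat_mul_def
      by (intro norm_2inf_meas borel_measurable_sum borel_measurable_times borel_measurable_diff
          borel_measurable_const cm) auto
    then show ?thesis unfolding Tg_def by (rule set_le_meas)
  qed
  have rho_eq: "norm_2inf n n (corr T Zs) = \<rho>" unfolding \<rho>_def Rs_def ..
  have RHS0: "0 \<le> RHS" unfolding RHS_def rho_eq
    using gam0 lnT0 lnn rho0 lam_pos[of "d - 1"] d0 by (intro mult_nonneg_nonneg add_nonneg_nonneg) auto
  have good: "space M - Bad \<subseteq> Tg"
  proof
    fix \<omega> assume \<omega>: "\<omega> \<in> space M - Bad"
    have g1: "(\<Sum>t<T. (N \<omega> i t)\<^sup>2) \<le> K * real T * \<nu> i" if "i < n" for i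
    proof -
      have "\<omega> \<notin> B1 i" using \<omega> that unfolding Bad_def by auto
      then show ?thesis using \<omega> unfolding B1_def K_def by (auto simp: mult_ac)
    qed
    have g2: "(\<Sum>t<T. v j t * N \<omega> i t)\<^sup>2 \<le> K * \<nu> i" if "i < n" "j < n" for i j
    proof -
      have "\<omega> \<notin> B2 (i, j)" using \<omega> that unfolding Bad_def by auto
      then show ?thesis using \<omega> unfolding B2_def K_def by (auto simp: mult_ac)
    qed
    have g3: "(\<Sum>t<T. ww T n x U lam a t * N \<omega> i t)\<^sup>2 \<le> K * \<nu> i" if "i < n" "a < d" for i a
    proof -
      have "\<omega> \<notin> B3 (i, a)" using \<omega> that unfolding Bad_def by auto
      then show ?thesis using \<omega> unfolding B3_def K_def by (auto simp: mult_ac)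
    qed
    have thsq: "K * \<nu> i \<le> (\<theta> * nz T (x i))\<^sup>2" if i: "i < n" for i
    proof -
      have "(\<theta> * nz T (x i))\<^sup>2 = K / (\<gamma> * real T) * (real T * sig2 T Zs i)"
        unfolding power_mult_distrib sx2 \<theta>_def using K0 gam0 T0 by simp
      also have "\<dots> = K * (sig2 T Zs i / \<gamma>)" using T0 by (simp add: field_simps)
      finally have eq: "(\<theta> * nz T (x i))\<^sup>2 = K * (sig2 T Zs i / \<gamma>)" .
      have "\<nu> i \<le> sig2 T Zs i / \<gamma>" using nu_gam[OF i] gam0 by (simp add: field_simps)
      then have "K * \<nu> i \<le> K * (sig2 T Zs i / \<gamma>)" using K0 by (rule mult_left_mono)
      then show ?thesis using eq by simp
    qed
    have xfun: "x = (\<lambda>i. cen T (Zs i))" unfolding x_def by (rule ext) simp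
    interpret DD: det T n d x "e \<omega>" U lam \<theta> \<eta>
    proof unfold_locales
      fix i assume i: "i < n"
      have "ip T (e \<omega> i) (e \<omega> i) \<le> ip T (\<lambda>t. N \<omega> i t) (\<lambda>t. N \<omega> i t)"
        unfolding e_def by (rule cen_norm_le[OF T0])
      also have "\<dots> = (\<Sum>t<T. (N \<omega> i t)\<^sup>2)" unfolding ip_def by (simp add: power2_eq_square)
      also have "\<dots> \<le> K * real T * \<nu> i" by (rule g1[OF i])
      also have "\<dots> \<le> \<eta> * (nz T (x i))\<^sup>2"
      proof -
        have "\<eta> * (nz T (x i))\<^sup>2 = K * real T * (sig2 T Zs i / \<gamma>)" unfolding sx2 \<eta>_def by simp
        moreover have "\<nu> i \<le> sig2 T Zs i / \<gamma>" using nu_gam[OF i] gam0 by (simp add: field_simps)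
        moreover have "0 \<le> K * real T" using K0 T0 by simp
        ultimately show ?thesis by (metis mult_left_mono)
      qed
      finally show "ip T (e \<omega> i) (e \<omega> i) \<le> \<eta> * (nz T (x i))\<^sup>2" .
    next
      fix i j assume i: "i < n" and j: "j < n"
      have "ip T (nv T (x j)) (e \<omega> i) = (\<Sum>t<T. v j t * N \<omega> i t)"
        unfolding e_def v_def
        by (subst ip_cen_inv) (auto simp: x_def cen_nv ip_def)
      then show "\<bar>ip T (nv T (x j)) (e \<omega> i)\<bar> \<le> \<theta> * nz T (x i)"
        using g2[OF i j] thsq[OF i] th0 nz_nonneg[of T "x i"] by (intro abs_le_from_sq) auto
    next
      fix i a assume i: "i < n" and a: "a < d"
      have "ip T (ww T n x U lam a) (e \<omega> i) = (\<Sum>t<T. ww T n x U lam a t * N \<omega> i t)"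
        unfolding e_def xfun
        by (subst ip_cen_inv) (auto simp: cen_ww ip_def)
      then show "\<bar>ip T (ww T n x U lam a) (e \<omega> i)\<bar> \<le> \<theta> * nz T (x i)"
        using g3[OF i a] thsq[OF i] th0 nz_nonneg[of T "x i"] by (intro abs_le_from_sq) auto
    qed (use spos lam_pos lam_sorted U_orth R_eig' small th0 eta0 d0 in auto)
    interpret FF: fin "real n" "real d" "lam (d - 1)" \<gamma> "real T" "ln (real T)" "ln (real n)" K 90 \<rho>
      by unfold_locales (use d0 lam_pos[of "d - 1"] gam0 T0 lnT0 lnn K0 K90 lnnT dlam nrho rho0 in auto)
    have rows: "L2_set (F \<omega> i) {..<d} \<le> RHS" if i: "i < n" for i
    proof -
      have "F \<omega> i = (\<lambda>a. \<Sum>l<n. (ip T (DD.vh i) (DD.vh l) - ip T (DD.v i) (DD.v l)) * (U l a / sqrt (lam a)))"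
        unfolding F_def mat_mul_def Rn_eq Rs_eq[unfolded Rs_def] v_def by simp
      then have "L2_set (F \<omega> i) {..<d} = L2_set (\<lambda>a. \<Sum>l<n. (ip T (DD.vh i) (DD.vh l) - ip T (DD.v i) (DD.v l)) * (U l a / sqrt (lam a))) {..<d}"
        by simp
      also have "\<dots> \<le> 2 * (2 * \<theta> + \<eta>) + 2 * \<theta> * sqrt (real d)
       + (2 * (2 * \<theta> + \<eta>) * L2_set (\<lambda>l. ip T (DD.v i) (DD.v l)) {..<n} + 2 * \<theta> * sqrt (real n)
          + 4 * (3 * \<theta> + \<eta>) * sqrt (real n)) / sqrt (lam (d - 1))" by (rule DD.det_main[OF i])
      also have "L2_set (\<lambda>l. ip T (DD.v i) (DD.v l)) {..<n} = \<rho>i i"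
        unfolding \<rho>i_def Rs_eq v_def ..
      also have "2 * (2 * \<theta> + \<eta>) + 2 * \<theta> * sqrt (real d)
       + (2 * (2 * \<theta> + \<eta>) * \<rho>i i + 2 * \<theta> * sqrt (real n)
          + 4 * (3 * \<theta> + \<eta>) * sqrt (real n)) / sqrt (lam (d - 1)) \<le>
          (40 * (90 + 1)) * sqrt (real d * ln (real T) / (\<gamma> * lam (d - 1)))
             * (1 + (sqrt (ln (real n) / \<gamma>) + sqrt (1 / real T)) * \<rho>)"
        using FF.final[OF rhoi0 rhoi_le[OF i]] unfolding FF.\<theta>_def FF.\<eta>_def \<theta>_def \<eta>_def .
      also have "\<dots> = RHS" unfolding RHS_def rho_eq by simp
      finally show ?thesis .
    qed
    have "norm_2inf n d (F \<omega>) \<le> RHS" by (rule norm_2inf_le[OF RHS0 rows])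
    then show "\<omega> \<in> Tg" using \<omega> unfolding Tg_def by auto
  qed
  have "1 - 2 * (2 + 1 / cl) / real n \<le> 1 - measure M Bad" using Badp fin_bound by linarith
  also have "\<dots> = measure M (space M - Bad)" using prob_compl[OF Badm] by simp
  also have "\<dots> \<le> measure M Tg" by (rule finite_measure_mono[OF good Tgm])
  finally show ?thesis unfolding Tg_def RHS_def F_def .
qed


theorem mainTheorem16:
  fixes n T d :: "nat \<Rightarrow> nat"
    and Zstar :: "nat \<Rightarrow> nat \<Rightarrow> nat \<Rightarrow> real"
    and M :: "nat \<Rightarrow> 'a measure"
    and N :: "nat \<Rightarrow> 'a \<Rightarrow> nat \<Rightarrow> nat \<Rightarrow> real"
    and \<nu> :: "nat \<Rightarrow> nat \<Rightarrow> real"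
    and lam :: "nat \<Rightarrow> nat \<Rightarrow> real"
    and U :: "nat \<Rightarrow> nat \<Rightarrow> nat \<Rightarrow> real"
  defines "Rstar \<equiv> \<lambda>k. corr (T k) (Zstar k)"
    and "R \<equiv> \<lambda>k \<omega>. corr (T k) (\<lambda>i t. Zstar k i t + N k \<omega> i t)"
    and "\<gamma> \<equiv> \<lambda>k. Min ((\<lambda>i. sig2 (T k) (Zstar k) i / \<nu> k i) ` {..<n k})"
    and "\<kappa> \<equiv> \<lambda>k. lam k 0 / lam k (d k - 1)"
  assumes n_lim: "filterlim n at_top sequentially"
    and T_lim: "filterlim T at_top sequentially"
    \<comment> \<open>signal powers positive\<close>
    and sig_pos: "\<And>k i. i < n k \<Longrightarrow> sig2 (T k) (Zstar k) i > 0"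
    \<comment> \<open>spectral decomposition of R*: d = rank, lam = nonzero eigenvalues, U orthonormal\<close>
    and lam_sorted: "\<And>k a b. a \<le> b \<Longrightarrow> b < d k \<Longrightarrow> lam k b \<le> lam k a"
    and lam_pos: "\<And>k a. a < d k \<Longrightarrow> lam k a > 0"
    and U_orth: "\<And>k a b. a < d k \<Longrightarrow> b < d k \<Longrightarrow>
                   (\<Sum>i<n k. U k i a * U k i b) = (if a = b then 1 else 0)"
    and R_eig: "\<And>k i j. i < n k \<Longrightarrow> j < n k \<Longrightarrow>
                   Rstar k i j = (\<Sum>a<d k. U k i a * lam k a * U k j a)"
    \<comment> \<open>Assumption 1\<close>
    and prob: "\<And>k. prob_space (M k)"
    and indep: "\<And>k. prob_space.indep_vars (M k) (\<lambda>i. PiM {..<T k} (\<lambda>_. borel))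
                      (\<lambda>i \<omega>. restrict (\<lambda>t. N k \<omega> i t) {..<T k}) {..<n k}"
    and mean_zero: "\<And>k i t. i < n k \<Longrightarrow> t < T k \<Longrightarrow>
                      integrable (M k) (\<lambda>\<omega>. N k \<omega> i t) \<and> (\<integral>\<omega>. N k \<omega> i t \<partial>M k) = 0"
    and nu_pos: "\<And>k i. i < n k \<Longrightarrow> \<nu> k i > 0"
    and subg: "\<And>k i. i < n k \<Longrightarrow> subgaussian_row (M k) (T k) (\<lambda>\<omega> t. N k \<omega> i t) (\<nu> k i)"
    and n_OT: "(\<lambda>k. real (n k)) \<in> O(\<lambda>k. real (T k))"
    \<comment> \<open>Assumption 2\<close>
    and lam_bdd: "\<exists>c>0. eventually (\<lambda>k. lam k (d k - 1) \<ge> c) sequentially"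
    and kappa_oT: "\<kappa> \<in> o(\<lambda>k. real (T k))"
    and kappa_gamma: "(\<lambda>k. \<kappa> k * ln (real (T k)) / \<gamma> k) \<longlonglongrightarrow> 0"
  shows "\<exists>C>0. (\<lambda>k. prob_space.prob (M k)
     {\<omega> \<in> space (M k).
        norm_2inf (n k) (d k)
          (mat_mul (n k) (\<lambda>i j. R k \<omega> i j - Rstar k i j) (\<lambda>i a. U k i a / sqrt (lam k a)))
        \<le> C * sqrt (real (d k) * ln (real (T k)) / (\<gamma> k * lam k (d k - 1)))
            * (1 + (sqrt (ln (real (n k)) / \<gamma> k) + sqrt (1 / real (T k)))
                   * norm_2inf (n k) (n k) (Rstar k))}) \<longlonglongrightarrow> 1"
proof -
  obtain cl where cl0: "cl > 0" and ev_cl: "eventually (\<lambda>k. lam k (d k - 1) \<ge> cl) sequentially"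
    using lam_bdd by blast
  obtain cn where cn0: "cn > 0" and ev_cn: "eventually (\<lambda>k. norm (real (n k)) \<le> cn * norm (real (T k))) sequentially"
    using n_OT by (elim landau_o.bigE) blast
  have ev_n2: "eventually (\<lambda>k. 2 \<le> n k) sequentially"
    using n_lim by (simp add: filterlim_at_top)
  have ev_T2: "eventually (\<lambda>k. 2 \<le> T k) sequentially"
    using T_lim by (simp add: filterlim_at_top)
  have "eventually (\<lambda>k. nat \<lceil>cn\<rceil> \<le> T k) sequentially"
    using T_lim unfolding filterlim_at_top by blast
  then have ev_Tc: "eventually (\<lambda>k. cn \<le> real (T k)) sequentially"
    by eventually_elim (meson real_nat_ceiling_ge of_nat_le_iff order_trans)
  have ev_kg: "eventually (\<lambda>k. \<kappa> k * ln (real (T k)) / \<gamma> k < 1 / 20000) sequentially"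
    using kappa_gamma by (rule order_tendstoD) simp
  have ev: "eventually (\<lambda>k. 1 - 2 * (2 + 1 / cl) / real (n k) \<le> prob_space.prob (M k)
     {\<omega> \<in> space (M k).
        norm_2inf (n k) (d k)
          (mat_mul (n k) (\<lambda>i j. R k \<omega> i j - Rstar k i j) (\<lambda>i a. U k i a / sqrt (lam k a)))
        \<le> 3640 * sqrt (real (d k) * ln (real (T k)) / (\<gamma> k * lam k (d k - 1)))
            * (1 + (sqrt (ln (real (n k)) / \<gamma> k) + sqrt (1 / real (T k)))
                   * norm_2inf (n k) (n k) (Rstar k))}) sequentially"
    using ev_cl ev_cn ev_n2 ev_T2 ev_Tc ev_kg
  proof eventually_elim
    case (elim k)
    have n0: "0 < n k" using elim by simp
    have gam0: "0 < \<gamma> k"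
      unfolding \<gamma>_def using n0 sig_pos nu_pos by (subst Min_gr_iff) auto
    have lamd: "0 < lam k (d k - 1)" using elim cl0 by linarith
    have kap1: "1 \<le> \<kappa> k"
    proof (cases "d k = 0")
      case True then show ?thesis unfolding \<kappa>_def using lamd by simp
    next
      case False
      then have "lam k (d k - 1) \<le> lam k 0" by (intro lam_sorted) auto
      then show ?thesis unfolding \<kappa>_def using lamd by simp
    qed
    have lnT0: "0 \<le> ln (real (T k))" using elim by simp
    have gam: "ln (real (T k)) / \<gamma> k \<le> 1 / 20000"
    proof -
      have "ln (real (T k)) / \<gamma> k \<le> \<kappa> k * ln (real (T k)) / \<gamma> k"
        using kap1 lnT0 gam0 mult_right_mono[OF kap1 lnT0] by (intro divide_right_mono) auto
      then show ?thesis using elim by linarith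
    qed
    have lnnT: "ln (real (n k)) \<le> 2 * ln (real (T k))"
    proof -
      have Tpos: "0 < real (T k)" using elim by simp
      have "real (n k) \<le> cn * real (T k)" using elim by simp
      then have "ln (real (n k)) \<le> ln (cn * real (T k))" using n0 by simp
      also have "\<dots> = ln cn + ln (real (T k))" using cn0 Tpos by (simp add: ln_mult)
      also have "ln cn \<le> ln (real (T k))"
        using elim cn0 by simp
      finally show ?thesis by simp
    qed
    show ?case
      unfolding R_def Rstar_def \<gamma>_def
      by (rule one_k[of "n k" "T k" "Zstar k" "d k" "lam k" "U k" "M k" "\<nu> k" "\<lambda>\<omega> i t. N k \<omega> i t" cl,
            folded \<gamma>_def])
         (use sig_pos lam_sorted lam_pos U_orth R_eig prob nu_pos subg elim cl0 lnnT gam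
          in \<open>auto simp: Rstar_def \<gamma>_def\<close>)
  qed
  have lim: "(\<lambda>k. 1 - 2 * (2 + 1 / cl) / real (n k)) \<longlonglongrightarrow> 1"
  proof -
    have "filterlim (\<lambda>k. real (n k)) at_top sequentially"
      using n_lim by (rule filterlim_compose[OF filterlim_real_sequentially])
    then have "(\<lambda>k. 2 * (2 + 1 / cl) / real (n k)) \<longlonglongrightarrow> 0"
      by (rule tendsto_divide_0[OF tendsto_const filterlim_at_top_imp_at_infinity])
    then show ?thesis using tendsto_diff[OF tendsto_const[of 1]] by fastforce
  qed
  show ?thesis
  proof (rule exI[of _ 3640], rule conjI)
    show "(0::real) < 3640" by simp
  next
    show "(\<lambda>k. prob_space.prob (M k)
     {\<omega> \<in> space (M k).
        norm_2inf (n k) (d k)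
          (mat_mul (n k) (\<lambda>i j. R k \<omega> i j - Rstar k i j) (\<lambda>i a. U k i a / sqrt (lam k a)))
        \<le> 3640 * sqrt (real (d k) * ln (real (T k)) / (\<gamma> k * lam k (d k - 1)))
            * (1 + (sqrt (ln (real (n k)) / \<gamma> k) + sqrt (1 / real (T k)))
                   * norm_2inf (n k) (n k) (Rstar k))}) \<longlonglongrightarrow> 1"
      by (rule tendsto_sandwich[OF ev _ lim tendsto_const]) (simp add: prob_space.prob_le_1[OF prob])
  qed
qed


end
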